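(* For every $r, d \ge 0$, the first-order theory of $\mathrm{TM}_r(d)$ equals the first-order theory of $\mathrm{TM}^{\mathrm{fin}}_r(d)$, and the MSO theory of $\mathrm{TM}_r(d)$ equals the MSO theory of $\mathrm{TM}^{\mathrm{fin}}_r(d)$.
   Context: Graphs are simple undirected graphs of arbitrary cardinality. A tree model of $r$ labels and height $d$ is a pair $(t,S)$ where $t$ is an $(r+1)$-labeled rooted tree (a tree with a distinguished root whose nodes are partitioned into label classes $P_1,\dots,P_{r+1}$, possibly infinite) and $S \subseteq [r]^2\times[d]$ such that: every root-to-leaf path has length exactly $d$; leaves are labeled from $[r]$ and internal nodes with $r+1$; $(i,j,l)\in S$ iff $(j,i,l)\in S$. It is a tree model of the graph whose vertices are the leaves of $t$, two leaves with labels $i,j$ at distance $2l$ in $t$ being adjacent iff $(i,j,l)\in S$. $\mathrm{TM}_r(d)$ is the class of all graphs isomorphic to a graph having such a tree model, and $\mathrm{TM}^{\mathrm{fin}}_r(d)$ is the class of finite graphs in $\mathrm{TM}_r(d)$. For a logic $\mathcal{L}\in\{\mathrm{FO},\mathrm{MSO}\}$ and a class $\mathcal{C}$ of graphs, the $\mathcal{L}$ theory of $\mathcal{C}$ is the set of all $\mathcal{L}$ sentences (over the vocabulary $\{E\}$) true in every graph of $\mathcal{C}$. *)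

theory Defs
  imports Main
begin

definition is_graph :: "'a set \<Rightarrow> ('a \<Rightarrow> 'a \<Rightarrow> bool) \<Rightarrow> bool" where
  "is_graph V E \<longleftrightarrow>
     (\<forall>x y. E x y \<longrightarrow> x \<in> V \<and> y \<in> V) \<and>
     (\<forall>x y. E x y \<longrightarrow> E y x) \<and>
     (\<forall>x. \<not> E x x)"

definition tm_child :: "'n set \<Rightarrow> 'n \<Rightarrow> ('n \<Rightarrow> 'n) \<Rightarrow> 'n \<Rightarrow> 'n \<Rightarrow> bool" where
  "tm_child N rt par w v \<longleftrightarrow> w \<in> N \<and> w \<noteq> rt \<and> par w = v"

definition tm_leaf :: "'n set \<Rightarrow> 'n \<Rightarrow> ('n \<Rightarrow> 'n) \<Rightarrow> 'n \<Rightarrow> bool" where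
  "tm_leaf N rt par v \<longleftrightarrow> v \<in> N \<and> \<not> (\<exists>w. tm_child N rt par w v)"

definition tm_leaves :: "'n set \<Rightarrow> 'n \<Rightarrow> ('n \<Rightarrow> 'n) \<Rightarrow> 'n set" where
  "tm_leaves N rt par = {v. tm_leaf N rt par v}"

definition is_tree_model ::
  "nat \<Rightarrow> nat \<Rightarrow> 'n set \<Rightarrow> 'n \<Rightarrow> ('n \<Rightarrow> 'n) \<Rightarrow> ('n \<Rightarrow> nat) \<Rightarrow> ('n \<Rightarrow> nat)
     \<Rightarrow> (nat \<times> nat \<times> nat) set \<Rightarrow> bool" where
  "is_tree_model r d N rt par dep lab S \<longleftrightarrow>
     rt \<in> N \<and> dep rt = 0 \<and>
     (\<forall>v\<in>N. v \<noteq> rt \<longrightarrow> par v \<in> N \<and> dep v = Suc (dep (par v))) \<and>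
     (\<forall>v\<in>N. dep v \<le> d) \<and>
     (\<forall>v. tm_leaf N rt par v \<longrightarrow> dep v = d) \<and>
     (\<forall>v. tm_leaf N rt par v \<longrightarrow> lab v \<in> {1..r}) \<and>
     (\<forall>v\<in>N. \<not> tm_leaf N rt par v \<longrightarrow> lab v = r + 1) \<and>
     S \<subseteq> {1..r} \<times> {1..r} \<times> {1..d} \<and>
     (\<forall>i j l. (i, j, l) \<in> S \<longleftrightarrow> (j, i, l) \<in> S)"

definition tm_leaf_dist :: "('n \<Rightarrow> 'n) \<Rightarrow> 'n \<Rightarrow> 'n \<Rightarrow> nat" where
  "tm_leaf_dist par u v = 2 * (LEAST k. (par ^^ k) u = (par ^^ k) v)"

definition tm_adj :: "('n \<Rightarrow> 'n) \<Rightarrow> ('n \<Rightarrow> nat) \<Rightarrow> (nat \<times> nat \<times> nat) set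
     \<Rightarrow> 'n \<Rightarrow> 'n \<Rightarrow> bool" where
  "tm_adj par lab S u v \<longleftrightarrow>
     (\<exists>l. tm_leaf_dist par u v = 2 * l \<and> (lab u, lab v, l) \<in> S)"

text \<open>Tree nodes
are taken from the type 'a \<times> nat, which is large enough: a tree model of
height d whose leaf set has the cardinality of V has at most |V|*(d+1) nodes.\<close>

definition in_TM :: "nat \<Rightarrow> nat \<Rightarrow> 'a set \<Rightarrow> ('a \<Rightarrow> 'a \<Rightarrow> bool) \<Rightarrow> bool" where
  "in_TM r d V E \<longleftrightarrow> is_graph V E \<and>
     (\<exists>(N :: ('a \<times> nat) set) rt par dep lab S f.
        is_tree_model r d N rt par dep lab S \<and>
        bij_betw f (tm_leaves N rt par) V \<and>
        (\<forall>u \<in> tm_leaves N rt par. \<forall>v \<in> tm_leaves N rt par.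
            E (f u) (f v) \<longleftrightarrow> tm_adj par lab S u v))"

datatype form =
    FEq nat nat
  | FEdge nat nat
  | FMem nat nat
  | FNeg form
  | FConj form form
  | FEx nat form
  | FExSet nat form

fun fv1 :: "form \<Rightarrow> nat set" where
  "fv1 (FEq i j) = {i, j}"
| "fv1 (FEdge i j) = {i, j}"
| "fv1 (FMem i j) = {i}"
| "fv1 (FNeg p) = fv1 p"
| "fv1 (FConj p q) = fv1 p \<union> fv1 q"
| "fv1 (FEx i p) = fv1 p - {i}"
| "fv1 (FExSet i p) = fv1 p"

fun fv2 :: "form \<Rightarrow> nat set" where
  "fv2 (FEq i j) = {}"
| "fv2 (FEdge i j) = {}"
| "fv2 (FMem i j) = {j}"
| "fv2 (FNeg p) = fv2 p"
| "fv2 (FConj p q) = fv2 p \<union> fv2 q"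
| "fv2 (FEx i p) = fv2 p"
| "fv2 (FExSet i p) = fv2 p - {i}"

fun is_fo :: "form \<Rightarrow> bool" where
  "is_fo (FEq i j) = True"
| "is_fo (FEdge i j) = True"
| "is_fo (FMem i j) = False"
| "is_fo (FNeg p) = is_fo p"
| "is_fo (FConj p q) = (is_fo p \<and> is_fo q)"
| "is_fo (FEx i p) = is_fo p"
| "is_fo (FExSet i p) = False"

fun sat :: "'a set \<Rightarrow> ('a \<Rightarrow> 'a \<Rightarrow> bool) \<Rightarrow> (nat \<Rightarrow> 'a) \<Rightarrow> (nat \<Rightarrow> 'a set)
              \<Rightarrow> form \<Rightarrow> bool" where
  "sat V E \<sigma> \<tau> (FEq i j) = (\<sigma> i = \<sigma> j)"
| "sat V E \<sigma> \<tau> (FEdge i j) = E (\<sigma> i) (\<sigma> j)"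
| "sat V E \<sigma> \<tau> (FMem i j) = (\<sigma> i \<in> \<tau> j)"
| "sat V E \<sigma> \<tau> (FNeg p) = (\<not> sat V E \<sigma> \<tau> p)"
| "sat V E \<sigma> \<tau> (FConj p q) = (sat V E \<sigma> \<tau> p \<and> sat V E \<sigma> \<tau> q)"
| "sat V E \<sigma> \<tau> (FEx i p) = (\<exists>x\<in>V. sat V E (\<sigma>(i := x)) \<tau> p)"
| "sat V E \<sigma> \<tau> (FExSet i p) = (\<exists>X. X \<subseteq> V \<and> sat V E \<sigma> (\<tau>(i := X)) p)"

definition mso_sentence :: "form \<Rightarrow> bool" where
  "mso_sentence p \<longleftrightarrow> fv1 p = {} \<and> fv2 p = {}"

definition fo_sentence :: "form \<Rightarrow> bool" where
  "fo_sentence p \<longleftrightarrow> is_fo p \<and> mso_sentence p"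

text \<open>Truth of a sentence in a graph (the assignments are irrelevant).\<close>

definition holds :: "'a set \<Rightarrow> ('a \<Rightarrow> 'a \<Rightarrow> bool) \<Rightarrow> form \<Rightarrow> bool" where
  "holds V E p \<longleftrightarrow> sat V E (\<lambda>_. undefined) (\<lambda>_. {}) p"

end

theory Submission
  imports Defs "HOL-Library.FuncSet"
begin


definition capc :: "nat \<Rightarrow> 'b set \<Rightarrow> nat" where
  "capc m A = (if finite A then min m (card A) else m)"

lemma capc_le: "capc m A \<le> m"
  by (simp add: capc_def)

lemma capc_pos: "1 \<le> m \<Longrightarrow> (0 < capc m A) = (A \<noteq> {})"
  by (auto simp: capc_def card_gt_0_iff)

lemma capc_empty[simp]: "capc m {} = 0"
  by (simp add: capc_def)

lemma capc_two:
  assumes "2 \<le> m" "2 \<le> capc m A" shows "\<exists>a\<in>A. \<exists>b\<in>A. a \<noteq> b"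
proof (rule ccontr)
  assume "\<not> ?thesis"
  then have "A \<subseteq> {}  \<or> (\<exists>a. A = {a})" by blast
  then have "finite A \<and> card A \<le> 1" by (auto simp: card_le_Suc0_iff_eq)
  then show False using assms by (auto simp: capc_def)
qed

lemma capc_two_iff:
  assumes "2 \<le> m" shows "(2 \<le> capc m A) = (\<exists>a\<in>A. \<exists>b\<in>A. a \<noteq> b)"
proof
  assume "2 \<le> capc m A" then show "\<exists>a\<in>A. \<exists>b\<in>A. a \<noteq> b" using capc_two assms by blast
next
  assume "\<exists>a\<in>A. \<exists>b\<in>A. a \<noteq> b"
  then obtain a b where ab: "a \<in> A" "b \<in> A" "a \<noteq> b" by blast
  show "2 \<le> capc m A"
  proof (cases "finite A")
    case True
    have "card {a,b} \<le> card A" using True ab by (intro card_mono) auto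
    then show ?thesis using ab True assms by (auto simp: capc_def)
  next
    case False then show ?thesis using assms by (simp add: capc_def)
  qed
qed

lemma capc_Un:
  assumes "A \<inter> B = {}" shows "capc m (A \<union> B) = min m (capc m A + capc m B)"
  using assms by (auto simp: capc_def card_Un_disjoint)

lemma capc_bij: "bij_betw h A B \<Longrightarrow> capc m A = capc m B"
  by (auto simp: capc_def bij_betw_finite bij_betw_same_card)

lemma capc_big:
  assumes "finite R" "R \<subseteq> A" "m \<le> card R" shows "capc m A = m"
proof (cases "finite A")
  case True
  then have "card R \<le> card A" using assms by (intro card_mono) auto
  then show ?thesis using True assms by (simp add: capc_def)
next
  case False then show ?thesis by (simp add: capc_def)
qed

lemma capc_UN_eq:
  assumes "finite W"
    and "\<forall>w\<in>W. \<forall>w'\<in>W. w \<noteq> w' \<longrightarrow> P w \<inter> P w' = {}"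
    and "\<forall>w\<in>W. \<forall>w'\<in>W. w \<noteq> w' \<longrightarrow> Q w \<inter> Q w' = {}"
    and "\<forall>w\<in>W. capc m (P w) = capc m (Q w)"
  shows "capc m (\<Union>(P ` W)) = capc m (\<Union>(Q ` W))"
  using assms
proof (induction W rule: finite_induct)
  case empty then show ?case by simp
next
  case (insert w F)
  have d1: "P w \<inter> \<Union>(P ` F) = {}" using insert.prems(1) insert.hyps(2) by fastforce
  have d2: "Q w \<inter> \<Union>(Q ` F) = {}" using insert.prems(2) insert.hyps(2) by fastforce
  have ih: "capc m (\<Union>(P ` F)) = capc m (\<Union>(Q ` F))"
    using insert.IH insert.prems by blast
  show ?case using d1 d2 ih insert.prems(3) by (simp add: capc_Un)
qed

lemma exists_sub_card:
  assumes "\<not> (finite F \<and> card F < n)"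
  shows "\<exists>R. R \<subseteq> F \<and> finite R \<and> card R = n"
proof (cases "finite F")
  case True
  then have "n \<le> card F" using assms by simp
  then show ?thesis using obtain_subset_with_card_n by (metis True finite_subset)
next
  case False
  then show ?thesis using infinite_arbitrarily_large by blast
qed

lemma distr1:
  assumes eq: "capc m1 A = capc m1 B" and fin: "finite (g ` A)" and cardT: "card (g ` A) \<le> T"
    and Tm: "T * m0 < m1" and m0: "1 \<le> m0"
  shows "\<exists>\<pi>. (\<forall>b\<in>B. \<pi> b \<in> A) \<and> (\<forall>\<delta>. capc m0 {b\<in>B. g (\<pi> b) = \<delta>} = capc m0 {a\<in>A. g a = \<delta>})"
proof (cases "finite A \<and> card A < m1")
  case True
  then have "capc m1 A = card A" by (simp add: capc_def)
  then have B: "finite B \<and> card B = card A" using eq True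
    by (auto simp: capc_def split: if_splits)
  then obtain \<beta> where \<beta>: "bij_betw \<beta> B A" using True finite_same_card_bij by metis
  have "\<forall>\<delta>. capc m0 {b\<in>B. g (\<beta> b) = \<delta>} = capc m0 {a\<in>A. g a = \<delta>}"
  proof
    fix \<delta>
    have "bij_betw \<beta> {b\<in>B. g (\<beta> b) = \<delta>} {a\<in>A. g a = \<delta>}"
      using \<beta> unfolding bij_betw_def inj_on_def by auto
    then show "capc m0 {b\<in>B. g (\<beta> b) = \<delta>} = capc m0 {a\<in>A. g a = \<delta>}" by (rule capc_bij)
  qed
  then show ?thesis using \<beta> bij_betwE by blast
next
  case False
  have cA: "capc m1 A = m1" using False by (auto simp: capc_def)
  then have Bbig: "\<not> (finite B \<and> card B < m1)" using eq by (auto simp: capc_def)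
  define F where "F \<delta> = {a\<in>A. g a = \<delta>}" for \<delta>
  define small where "small \<delta> \<longleftrightarrow> finite (F \<delta>) \<and> card (F \<delta>) < m0" for \<delta>
  define R where "R \<delta> = (if small \<delta> then F \<delta> else (SOME R. R \<subseteq> F \<delta> \<and> finite R \<and> card R = m0))" for \<delta>
  have R1: "R \<delta> \<subseteq> F \<delta> \<and> finite (R \<delta>) \<and> card (R \<delta>) = (if small \<delta> then card (F \<delta>) else m0)" for \<delta>
  proof (cases "small \<delta>")
    case True then show ?thesis by (simp add: R_def small_def)
  next
    case False
    then have "\<exists>R. R \<subseteq> F \<delta> \<and> finite R \<and> card R = m0" using exists_sub_card small_def by blast
    from someI_ex[OF this] show ?thesis using False unfolding R_def by simp
  qed
  have Rle: "card (R \<delta>) \<le> m0" for \<delta> using R1[of \<delta>] by (auto simp: small_def)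
  define RR where "RR = (\<Union>\<delta>\<in>g ` A. R \<delta>)"
  have finRR: "finite RR" unfolding RR_def by (rule finite_UN_I[OF fin]) (use R1 in blast)
  have "card RR \<le> (\<Sum>\<delta>\<in>g ` A. card (R \<delta>))" unfolding RR_def by (rule card_UN_le[OF fin])
  also have "\<dots> \<le> (\<Sum>\<delta>\<in>g ` A. m0)" by (intro sum_mono Rle)
  also have "\<dots> \<le> T * m0" using cardT by simp
  finally have cRR: "card RR < m1" using Tm by simp
  have "\<exists>\<delta>0\<in>g ` A. \<not> small \<delta>0"
  proof (rule ccontr)
    assume "\<not> ?thesis"
    then have sm: "\<forall>\<delta>\<in>g ` A. small \<delta>" by blast
    have Aeq: "A = (\<Union>\<delta>\<in>g ` A. F \<delta>)" unfolding F_def by auto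
    have "finite A" using sm fin Aeq small_def by (metis finite_UN)
    moreover have "card A \<le> T * m0"
    proof -
      have "card A \<le> (\<Sum>\<delta>\<in>g ` A. card (F \<delta>))" using card_UN_le[OF fin, of F] Aeq by simp
      also have "\<dots> \<le> (\<Sum>\<delta>\<in>g ` A. m0)" using sm small_def by (intro sum_mono) auto
      also have "\<dots> \<le> T * m0" using cardT by simp
      finally show ?thesis .
    qed
    ultimately show False using False Tm by simp
  qed
  then obtain \<delta>0 where d0: "\<delta>0 \<in> g ` A" "\<not> small \<delta>0" by blast
  then have "F \<delta>0 \<noteq> {}" using m0 unfolding small_def by auto
  then obtain a0 where a0: "a0 \<in> A" "g a0 = \<delta>0" unfolding F_def by auto
  have "\<not> (finite B \<and> card B < card RR)" using Bbig cRR by auto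
  then obtain B0 where B0: "B0 \<subseteq> B" "finite B0" "card B0 = card RR"
    using exists_sub_card by blast
  obtain \<psi> where \<psi>: "bij_betw \<psi> RR B0" using finite_same_card_bij[OF finRR B0(2)] B0(3) by metis
  define \<pi> where "\<pi> b = (if b \<in> B0 then inv_into RR \<psi> b else a0)" for b
  have RRA: "RR \<subseteq> A" unfolding RR_def using R1 F_def by auto
  have piA: "\<forall>b\<in>B. \<pi> b \<in> A"
  proof
    fix b assume "b \<in> B"
    show "\<pi> b \<in> A"
    proof (cases "b \<in> B0")
      case True
      then have "inv_into RR \<psi> b \<in> RR" using \<psi> by (metis bij_betw_def inv_into_into)
      then show ?thesis using True RRA \<pi>_def by auto
    qed (use a0 \<pi>_def in auto)
  qed
  have Rg: "a \<in> R \<delta>' \<Longrightarrow> g a = \<delta>' \<and> a \<in> A" for a \<delta>' using R1[of \<delta>'] F_def by auto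
  have RRF: "RR \<inter> F \<delta> = (if \<delta> \<in> g ` A then R \<delta> else {})" for \<delta>
  proof -
    have "x \<in> RR \<inter> F \<delta> \<longleftrightarrow> x \<in> (if \<delta> \<in> g ` A then R \<delta> else {})" for x
    proof
      assume "x \<in> RR \<inter> F \<delta>"
      then obtain \<delta>' where d: "\<delta>' \<in> g ` A" "x \<in> R \<delta>'" "g x = \<delta>" unfolding RR_def F_def by blast
      then have "\<delta>' = \<delta>" using Rg[of x \<delta>'] by simp
      then show "x \<in> (if \<delta> \<in> g ` A then R \<delta> else {})" using d by simp
    next
      assume "x \<in> (if \<delta> \<in> g ` A then R \<delta> else {})"
      then have "\<delta> \<in> g ` A" "x \<in> R \<delta>" by (auto split: if_splits)
      then show "x \<in> RR \<inter> F \<delta>" using Rg unfolding RR_def F_def by blast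
    qed
    then show ?thesis by blast
  qed
  have "capc m0 {b\<in>B. g (\<pi> b) = \<delta>} = capc m0 (F \<delta>)" for \<delta>
  proof (cases "small \<delta>")
    case True
    then have nd: "\<delta> \<noteq> \<delta>0" using d0 by auto
    have RFs: "RR \<inter> F \<delta> = F \<delta>" using RRF True R_def F_def by auto
    have injRR: "inj_on \<psi> RR" using \<psi> by (simp add: bij_betw_def)
    have "{b\<in>B. g (\<pi> b) = \<delta>} = \<psi> ` (RR \<inter> F \<delta>)"
    proof (intro equalityI subsetI)
      fix b assume "b \<in> {b\<in>B. g (\<pi> b) = \<delta>}"
      then have b: "b \<in> B" "g (\<pi> b) = \<delta>" by auto
      then have bB0: "b \<in> B0" using nd a0 \<pi>_def by (cases "b \<in> B0") auto
      then have pR: "\<pi> b \<in> RR" "\<psi> (\<pi> b) = b" using \<psi> \<pi>_def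
        by (auto simp: bij_betw_def inv_into_into f_inv_into_f)
      then have "\<pi> b \<in> F \<delta>" using RRA b(2) F_def by auto
      then show "b \<in> \<psi> ` (RR \<inter> F \<delta>)" using pR by (intro image_eqI[of _ _ "\<pi> b"]) auto
    next
      fix b assume "b \<in> \<psi> ` (RR \<inter> F \<delta>)"
      then obtain a where a: "a \<in> RR" "a \<in> F \<delta>" "b = \<psi> a" by blast
      have "\<psi> a \<in> B0" using a \<psi> bij_betwE by blast
      then have "\<pi> (\<psi> a) = a" using a \<psi> \<pi>_def by (simp add: bij_betw_def inv_into_f_f)
      then show "b \<in> {b\<in>B. g (\<pi> b) = \<delta>}" using a F_def \<open>\<psi> a \<in> B0\<close> B0 by auto
    qed
    moreover have "bij_betw \<psi> (RR \<inter> F \<delta>) (\<psi> ` (RR \<inter> F \<delta>))"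
      using inj_on_subset[OF injRR, of "RR \<inter> F \<delta>"] by (simp add: inj_on_imp_bij_betw)
    ultimately show ?thesis using RFs capc_bij by metis
  next
    case False
    then have "F \<delta> \<noteq> {}" using m0 unfolding small_def by auto
    then have dA: "\<delta> \<in> g ` A" unfolding F_def by auto
    have sub: "\<psi> ` R \<delta> \<subseteq> {b\<in>B. g (\<pi> b) = \<delta>}"
    proof
      fix b assume "b \<in> \<psi> ` R \<delta>"
      then obtain a where a: "a \<in> R \<delta>" "b = \<psi> a" by blast
      have aRR: "a \<in> RR" using a dA RR_def by auto
      then have "b \<in> B0" using a \<psi> bij_betwE by blast
      moreover have "\<pi> b = a" using a aRR \<psi> \<pi>_def \<open>b \<in> B0\<close> by (simp add: bij_betw_def inv_into_f_f)
      ultimately show "b \<in> {b\<in>B. g (\<pi> b) = \<delta>}" using B0 a R1 F_def by auto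
    qed
    have "R \<delta> \<subseteq> RR" using dA RR_def by auto
    then have injR: "inj_on \<psi> (R \<delta>)" using \<psi> inj_on_subset by (auto simp: bij_betw_def)
    have c1: "card (\<psi> ` R \<delta>) = m0" using R1[of \<delta>] False card_image[OF injR] by simp
    have "capc m0 {b\<in>B. g (\<pi> b) = \<delta>} = m0"
      using capc_big[OF _ sub] c1 R1 by simp
    moreover have "capc m0 (F \<delta>) = m0" using False unfolding small_def capc_def by auto
    ultimately show ?thesis by simp
  qed
  then show ?thesis using piA F_def by auto
qed

lemma distr:
  assumes W: "finite W" "h1 ` A \<subseteq> W" "h2 ` B \<subseteq> W"
    and eq: "\<forall>\<omega>. capc m1 {a\<in>A. h1 a = \<omega>} = capc m1 {b\<in>B. h2 b = \<omega>}"
    and fin: "finite (g ` A)" and cardT: "card (g ` A) \<le> T"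
    and Tm: "T * m0 < m1" and m0: "1 \<le> m0"
  shows "\<exists>\<pi>. (\<forall>b\<in>B. \<pi> b \<in> A \<and> h1 (\<pi> b) = h2 b) \<and>
             (\<forall>\<delta>. capc m0 {b\<in>B. g (\<pi> b) = \<delta>} = capc m0 {a\<in>A. g a = \<delta>})"
proof -
  define AA where "AA \<omega> = {a\<in>A. h1 a = \<omega>}" for \<omega>
  define BB where "BB \<omega> = {b\<in>B. h2 b = \<omega>}" for \<omega>
  have "\<forall>\<omega>. \<exists>\<pi>. (\<forall>b\<in>BB \<omega>. \<pi> b \<in> AA \<omega>) \<and>
     (\<forall>\<delta>. capc m0 {b\<in>BB \<omega>. g (\<pi> b) = \<delta>} = capc m0 {a\<in>AA \<omega>. g a = \<delta>})"
  proof
    fix \<omega>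
    have f2: "finite (g ` AA \<omega>)" using fin by (rule finite_subset[rotated]) (auto simp: AA_def)
    have "card (g ` AA \<omega>) \<le> card (g ` A)" using fin by (intro card_mono) (auto simp: AA_def)
    then have c2: "card (g ` AA \<omega>) \<le> T" using cardT by simp
    have e: "capc m1 (AA \<omega>) = capc m1 (BB \<omega>)" using eq AA_def BB_def by simp
    show "\<exists>\<pi>. (\<forall>b\<in>BB \<omega>. \<pi> b \<in> AA \<omega>) \<and>
     (\<forall>\<delta>. capc m0 {b\<in>BB \<omega>. g (\<pi> b) = \<delta>} = capc m0 {a\<in>AA \<omega>. g a = \<delta>})"
      by (rule distr1[OF e f2 c2 Tm m0])
  qed
  from choice[OF this] obtain PP where PP: "\<forall>\<omega>. (\<forall>b\<in>BB \<omega>. PP \<omega> b \<in> AA \<omega>) \<and>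
     (\<forall>\<delta>. capc m0 {b\<in>BB \<omega>. g (PP \<omega> b) = \<delta>} = capc m0 {a\<in>AA \<omega>. g a = \<delta>})"
    by blast
  define \<pi> where "\<pi> b = PP (h2 b) b" for b
  have p1: "\<forall>b\<in>B. \<pi> b \<in> A \<and> h1 (\<pi> b) = h2 b"
  proof
    fix b assume "b \<in> B"
    then have "b \<in> BB (h2 b)" by (simp add: BB_def)
    then have "PP (h2 b) b \<in> AA (h2 b)" using PP by blast
    then show "\<pi> b \<in> A \<and> h1 (\<pi> b) = h2 b" by (simp add: \<pi>_def AA_def)
  qed
  have "capc m0 {b\<in>B. g (\<pi> b) = \<delta>} = capc m0 {a\<in>A. g a = \<delta>}" for \<delta>
  proof -
    have e1: "{b\<in>B. g (\<pi> b) = \<delta>} = (\<Union>\<omega>\<in>W. {b\<in>BB \<omega>. g (PP \<omega> b) = \<delta>})"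
      using W(3) unfolding \<pi>_def BB_def by blast
    have e2: "{a\<in>A. g a = \<delta>} = (\<Union>\<omega>\<in>W. {a\<in>AA \<omega>. g a = \<delta>})"
      using W(2) unfolding AA_def by blast
    have d1: "\<forall>w\<in>W. \<forall>w'\<in>W. w \<noteq> w' \<longrightarrow> {b\<in>BB w. g (PP w b) = \<delta>} \<inter> {b\<in>BB w'. g (PP w' b) = \<delta>} = {}"
      unfolding BB_def by blast
    have d2: "\<forall>w\<in>W. \<forall>w'\<in>W. w \<noteq> w' \<longrightarrow> {a\<in>AA w. g a = \<delta>} \<inter> {a\<in>AA w'. g a = \<delta>} = {}"
      unfolding AA_def by blast
    have d3: "\<forall>w\<in>W. capc m0 {b\<in>BB w. g (PP w b) = \<delta>} = capc m0 {a\<in>AA w. g a = \<delta>}"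
      using PP by blast
    show ?thesis unfolding e1 e2 by (rule capc_UN_eq[OF W(1) d1 d2 d3])
  qed
  then show ?thesis using p1 by blast
qed


lemma fin_factor:
  assumes "finite (range h)"
  shows "finite {g :: 'x \<Rightarrow> nat. (\<forall>z. g z \<le> m) \<and> (\<forall>z z'. h z = h z' \<longrightarrow> g z = g z')}"
proof -
  let ?G = "{g :: 'x \<Rightarrow> nat. (\<forall>z. g z \<le> m) \<and> (\<forall>z z'. h z = h z' \<longrightarrow> g z = g z')}"
  have "?G \<subseteq> (\<lambda>\<phi> z. \<phi> (h z)) ` (range h \<rightarrow>\<^sub>E {..m})"
  proof
    fix g assume g: "g \<in> ?G"
    define \<phi> where "\<phi> = restrict (\<lambda>y. g (inv h y)) (range h)"
    have gle: "\<forall>z. g z \<le> m" using g by blast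
    have gf: "\<forall>z z'. h z = h z' \<longrightarrow> g z = g z'" using g by blast
    have phi: "\<phi> \<in> range h \<rightarrow>\<^sub>E {..m}" unfolding \<phi>_def using gle by (simp add: restrict_PiE_iff)
    have geq: "g = (\<lambda>z. \<phi> (h z))"
    proof
      fix z
      have hz: "h (inv h (h z)) = h z" by (simp add: f_inv_into_f)
      have "\<phi> (h z) = g (inv h (h z))" by (simp add: \<phi>_def)
      also have "\<dots> = g z" using gf hz by blast
      finally show "g z = \<phi> (h z)" by simp
    qed
    show "g \<in> (\<lambda>\<phi> z. \<phi> (h z)) ` (range h \<rightarrow>\<^sub>E {..m})" using geq phi by (rule image_eqI)
  qed
  moreover have "finite (range h \<rightarrow>\<^sub>E {..m})" using assms by (intro finite_PiE) auto
  ultimately show ?thesis using finite_subset by blast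
qed

locale tctx =
  fixes par :: "'n \<Rightarrow> 'n" and rt :: 'n and dep :: "'n \<Rightarrow> nat" and d :: nat
    and lab :: "'n \<Rightarrow> nat" and r :: nat and K :: nat
begin

definition ch :: "'n set \<Rightarrow> 'n \<Rightarrow> 'n set" where
  "ch N v = {w \<in> N. w \<noteq> rt \<and> par w = v}"

definition valid :: "'n set \<Rightarrow> bool" where
  "valid N \<longleftrightarrow> rt \<in> N \<and> dep rt = 0 \<and> (\<forall>v\<in>N. v \<noteq> rt \<longrightarrow> par v \<in> N \<and> dep v = Suc (dep (par v))) \<and>
     (\<forall>v\<in>N. dep v \<le> d) \<and> (\<forall>v\<in>N. dep v < d \<longrightarrow> (\<exists>w. w \<in> ch N v)) \<and>
     (\<forall>v\<in>N. dep v = d \<longrightarrow> lab v \<le> r)"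

definition desc :: "'n set \<Rightarrow> nat \<Rightarrow> 'n \<Rightarrow> 'n set" where
  "desc N k v = {a \<in> N. dep a = d \<and> (par ^^ k) a = v}"

fun col :: "('n set \<times> (nat \<Rightarrow> 'n set)) \<times> 'n \<Rightarrow> nat \<times> nat set" where
  "col ((N, \<tau>), v) = (if lab v \<le> r then lab v else 0, {j. j < K \<and> v \<in> \<tau> j})"

primrec eqv :: "nat \<Rightarrow> nat \<Rightarrow> ('n set \<times> (nat \<Rightarrow> 'n set)) \<times> 'n \<Rightarrow> ('n set \<times> (nat \<Rightarrow> 'n set)) \<times> 'n \<Rightarrow> bool" where
  "eqv m 0 x y = (col x = col y)"
| "eqv m (Suc k) x y = (\<forall>z. capc m {w \<in> ch (fst (fst x)) (snd x). eqv m k (fst x, w) z} =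
                             capc m {w \<in> ch (fst (fst y)) (snd y). eqv m k (fst y, w) z})"

lemma eqv_refl[simp]: "eqv m k x x"
  by (cases k) auto

lemma eqv_sym: "eqv m k x y \<Longrightarrow> eqv m k y x"
  by (cases k) auto

lemma eqv_trans: "eqv m k x y \<Longrightarrow> eqv m k y z \<Longrightarrow> eqv m k x z"
  by (cases k) auto

definition cls :: "nat \<Rightarrow> nat \<Rightarrow> ('n set \<times> (nat \<Rightarrow> 'n set)) \<times> 'n \<Rightarrow> (('n set \<times> (nat \<Rightarrow> 'n set)) \<times> 'n) set" where
  "cls m k x = {y. eqv m k x y}"

lemma eqv_cls: "eqv m k x y \<longleftrightarrow> cls m k x = cls m k y"
proof
  assume "eqv m k x y" then show "cls m k x = cls m k y"
    unfolding cls_def using eqv_sym eqv_trans by blast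
next
  assume "cls m k x = cls m k y" then show "eqv m k x y"
    unfolding cls_def using eqv_refl by (metis mem_Collect_eq)
qed

lemma finite_cls: "finite (range (cls m k))"
proof (induction k)
  case 0
  have "range (cls m 0) \<subseteq> (\<lambda>c. {y. col y = c}) ` ({..r} \<times> Pow {..<K})"
  proof
    fix C assume "C \<in> range (cls m 0)"
    then obtain x where x: "C = cls m 0 x" by blast
    obtain N \<tau> v where xe: "x = ((N, \<tau>), v)" by (metis prod.collapse)
    have ci: "col x \<in> {..r} \<times> Pow {..<K}" unfolding xe by auto
    have ce: "C = {y. col y = col x}" unfolding x cls_def by auto
    show "C \<in> (\<lambda>c. {y. col y = c}) ` ({..r} \<times> Pow {..<K})" by (rule image_eqI[where f="\<lambda>c. {y. col y = c}", OF ce ci])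
  qed
  moreover have "finite ((\<lambda>c. {y. col y = c}) ` ({..r} \<times> Pow {..<K}))" by simp
  ultimately show ?case by (rule finite_subset)
next
  case (Suc k)
  define sig where "sig x = (\<lambda>z. capc m {w \<in> ch (fst (fst x)) (snd x). eqv m k (fst x, w) z})" for x
  have sigG: "range sig \<subseteq> {g. (\<forall>z. g z \<le> m) \<and> (\<forall>z z'. cls m k z = cls m k z' \<longrightarrow> g z = g z')}"
  proof
    fix g assume "g \<in> range sig"
    then obtain x where x: "g = sig x" by blast
    have "\<forall>z z'. cls m k z = cls m k z' \<longrightarrow> g z = g z'"
    proof (intro allI impI)
      fix z z' assume "cls m k z = cls m k z'"
      then have "\<And>a. eqv m k a z = eqv m k a z'" using eqv_cls by metis
      then show "g z = g z'" unfolding x sig_def by simp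
    qed
    moreover have "\<forall>z. g z \<le> m" unfolding x sig_def by (simp only: capc_le simp_thms)
    ultimately show "g \<in> {g. (\<forall>z. g z \<le> m) \<and> (\<forall>z z'. cls m k z = cls m k z' \<longrightarrow> g z = g z')}"
      by blast
  qed
  have fs: "finite (range sig)" using fin_factor[OF Suc.IH] sigG finite_subset by blast
  have "range (cls m (Suc k)) \<subseteq> (\<lambda>g. {y. g = sig y}) ` range sig"
  proof
    fix C assume "C \<in> range (cls m (Suc k))"
    then obtain x where x: "C = cls m (Suc k) x" by blast
    have ce: "C = {y. sig x = sig y}" unfolding x cls_def sig_def eqv.simps fun_eq_iff by (rule refl)
    show "C \<in> (\<lambda>g. {y. g = sig y}) ` range sig" by (rule image_eqI[where f="\<lambda>g. {y. g = sig y}", OF ce rangeI[of sig x]])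
  qed
  then show ?case using fs finite_subset by blast
qed

definition ncl :: "nat \<Rightarrow> nat \<Rightarrow> nat" where
  "ncl m k = card (range (cls m k))"

lemma anc:
  assumes "valid N" "a \<in> N" "j \<le> dep a"
  shows "(par ^^ j) a \<in> N \<and> dep ((par ^^ j) a) = dep a - j"
  using assms(3)
proof (induction j)
  case 0 then show ?case using assms by simp
next
  case (Suc j)
  then have b: "(par ^^ j) a \<in> N" "dep ((par ^^ j) a) = dep a - j" by auto
  then have "(par ^^ j) a \<noteq> rt" using Suc.prems assms(1) unfolding valid_def by auto
  then show ?case using b assms(1) unfolding valid_def by auto
qed

lemma child:
  assumes "valid N" "w \<in> ch N v"
  shows "w \<in> N \<and> par w = v \<and> v \<in> N \<and> dep w = Suc (dep v)"
  using assms unfolding valid_def ch_def by auto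

lemma desc_sub: "a \<in> desc N k v \<Longrightarrow> a \<in> N \<and> dep a = d \<and> (par ^^ k) a = v"
  by (simp add: desc_def)

lemma desc_0: "v \<in> N \<Longrightarrow> dep v = d \<Longrightarrow> desc N 0 v = {v}"
  by (auto simp: desc_def)

lemma desc_Suc:
  assumes "valid N" "v \<in> N" "dep v + Suc k = d"
  shows "desc N (Suc k) v = (\<Union>w\<in>ch N v. desc N k w)"
proof (intro equalityI subsetI)
  fix a assume a: "a \<in> desc N (Suc k) v"
  then have a1: "a \<in> N" "dep a = d" "par ((par ^^ k) a) = v" by (auto simp: desc_def)
  have w: "(par ^^ k) a \<in> N" "dep ((par ^^ k) a) = d - k" using anc[OF assms(1) a1(1), of k] a1 assms by auto
  then have "(par ^^ k) a \<noteq> rt" using assms(1,3) unfolding valid_def by auto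
  then have "(par ^^ k) a \<in> ch N v" using w a1 by (auto simp: ch_def)
  then show "a \<in> (\<Union>w\<in>ch N v. desc N k w)" using a1 by (auto simp: desc_def)
next
  fix a assume "a \<in> (\<Union>w\<in>ch N v. desc N k w)"
  then obtain w where "w \<in> ch N v" "a \<in> desc N k w" by blast
  then show "a \<in> desc N (Suc k) v" by (auto simp: desc_def ch_def)
qed

lemma desc_mono:
  assumes "valid N" "v \<in> N" "dep v + Suc k = d" "w \<in> ch N v"
  shows "desc N k w \<subseteq> desc N (Suc k) v"
  using desc_Suc[OF assms(1-3)] assms(4) by blast

lemma desc_disj: "w1 \<noteq> w2 \<Longrightarrow> desc N k w1 \<inter> desc N k w2 = {}"
  by (auto simp: desc_def)

lemma desc_root:
  assumes "valid N" shows "desc N d rt = {a \<in> N. dep a = d}"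
proof (intro equalityI subsetI)
  fix a assume "a \<in> {a \<in> N. dep a = d}"
  then have a: "a \<in> N" "dep a = d" by auto
  have "(par ^^ d) a \<in> N" "dep ((par ^^ d) a) = 0" using anc[OF assms a(1), of d] a by auto
  then have "(par ^^ d) a = rt" using assms unfolding valid_def by (metis nat.distinct(1))
  then show "a \<in> desc N d rt" using a by (simp add: desc_def)
qed (auto simp: desc_def)

lemma col_leaf:
  assumes "valid N" "a \<in> N" "dep a = d"
  shows "col ((N', \<tau>), a) = (lab a, {j. j < K \<and> a \<in> \<tau> j})"
  using assms unfolding valid_def by auto

end


context tctx begin

lemma eqv_SucD:
  assumes "eqv m (Suc k) ((N1,\<tau>1),v1) ((N2,\<tau>2),v2)"
  shows "capc m {w \<in> ch N1 v1. eqv m k ((N1,\<tau>1),w) z} = capc m {w \<in> ch N2 v2. eqv m k ((N2,\<tau>2),w) z}"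
  using assms unfolding eqv.simps fst_conv snd_conv by (rule spec)

lemma eqv_SucI:
  assumes "\<And>z. capc m {w \<in> ch N1 v1. eqv m k ((N1,\<tau>1),w) z} = capc m {w \<in> ch N2 v2. eqv m k ((N2,\<tau>2),w) z}"
  shows "eqv m (Suc k) ((N1,\<tau>1),v1) ((N2,\<tau>2),v2)"
  unfolding eqv.simps fst_conv snd_conv using assms by blast

lemma partner:
  assumes "eqv m (Suc k) ((N1,\<tau>1),v1) ((N2,\<tau>2),v2)" "1 \<le> m" "w1 \<in> ch N1 v1"
  shows "\<exists>w2\<in>ch N2 v2. eqv m k ((N1,\<tau>1),w1) ((N2,\<tau>2),w2)"
proof -
  define L where "L = {w \<in> ch N1 v1. eqv m k ((N1,\<tau>1),w) ((N1,\<tau>1),w1)}"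
  define R where "R = {w \<in> ch N2 v2. eqv m k ((N2,\<tau>2),w) ((N1,\<tau>1),w1)}"
  have e: "capc m L = capc m R" unfolding L_def R_def by (rule eqv_SucD[OF assms(1)])
  have "w1 \<in> L" using assms(3) by (simp add: L_def)
  then have "L \<noteq> {}" by blast
  then have "0 < capc m L" using capc_pos[OF assms(2), of L] by blast
  then have "0 < capc m R" using e by simp
  then have "R \<noteq> {}" using capc_pos[OF assms(2), of R] by blast
  then obtain w2 where "w2 \<in> R" by blast
  then have "w2 \<in> ch N2 v2" "eqv m k ((N1,\<tau>1),w1) ((N2,\<tau>2),w2)" using eqv_sym unfolding R_def by auto
  then show ?thesis by blast
qed

lemma partner2:
  assumes "eqv m (Suc k) ((N1,\<tau>1),v1) ((N2,\<tau>2),v2)" "2 \<le> m" "w1 \<in> ch N1 v1" "w1' \<in> ch N1 v1" "w1 \<noteq> w1'"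
  shows "\<exists>w2\<in>ch N2 v2. \<exists>w2'\<in>ch N2 v2. w2 \<noteq> w2' \<and> eqv m k ((N1,\<tau>1),w1) ((N2,\<tau>2),w2) \<and>
            eqv m k ((N1,\<tau>1),w1') ((N2,\<tau>2),w2')"
proof (cases "eqv m k ((N1,\<tau>1),w1) ((N1,\<tau>1),w1')")
  case True
  define L where "L = {w \<in> ch N1 v1. eqv m k ((N1,\<tau>1),w) ((N1,\<tau>1),w1)}"
  define R where "R = {w \<in> ch N2 v2. eqv m k ((N2,\<tau>2),w) ((N1,\<tau>1),w1)}"
  have e: "capc m L = capc m R" unfolding L_def R_def by (rule eqv_SucD[OF assms(1)])
  have "w1 \<in> L" using assms(3) by (simp add: L_def)
  moreover have "w1' \<in> L" using assms(4) True eqv_sym unfolding L_def by blast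
  ultimately have "\<exists>a\<in>L. \<exists>b\<in>L. a \<noteq> b" using assms(5) by blast
  then have "2 \<le> capc m L" using capc_two_iff[OF assms(2)] by blast
  then have "2 \<le> capc m R" using e by simp
  then obtain a b where ab: "a \<in> R" "b \<in> R" "a \<noteq> b" using capc_two[OF assms(2)] by blast
  then have ab2: "a \<in> ch N2 v2" "b \<in> ch N2 v2"
    "eqv m k ((N2,\<tau>2),a) ((N1,\<tau>1),w1)" "eqv m k ((N2,\<tau>2),b) ((N1,\<tau>1),w1)"
    unfolding R_def by auto
  have "eqv m k ((N1,\<tau>1),w1) ((N2,\<tau>2),a)" using ab2(3) eqv_sym by blast
  moreover have "eqv m k ((N1,\<tau>1),w1') ((N2,\<tau>2),b)"
  proof -
    have "eqv m k ((N1,\<tau>1),w1') ((N1,\<tau>1),w1)" using True eqv_sym by blast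
    moreover have "eqv m k ((N1,\<tau>1),w1) ((N2,\<tau>2),b)" using ab2(4) eqv_sym by blast
    ultimately show ?thesis by (rule eqv_trans)
  qed
  ultimately show ?thesis using ab ab2 by blast
next
  case False
  obtain w2 where w2: "w2 \<in> ch N2 v2" "eqv m k ((N1,\<tau>1),w1) ((N2,\<tau>2),w2)"
    using partner[OF assms(1) _ assms(3)] assms(2) by auto
  obtain w2' where w2': "w2' \<in> ch N2 v2" "eqv m k ((N1,\<tau>1),w1') ((N2,\<tau>2),w2')"
    using partner[OF assms(1) _ assms(4)] assms(2) by auto
  have "w2 \<noteq> w2'"
  proof
    assume "w2 = w2'"
    then have "eqv m k ((N2,\<tau>2),w2) ((N1,\<tau>1),w1')" using w2'(2) eqv_sym by blast
    then have "eqv m k ((N1,\<tau>1),w1) ((N1,\<tau>1),w1')" using w2(2) eqv_trans by blast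
    then show False using False by blast
  qed
  then show ?thesis using w2 w2' by blast
qed

lemma ex_col:
  assumes vN: "valid N1" "valid N2" and m: "1 \<le> m"
  shows "v1 \<in> N1 \<Longrightarrow> dep v1 + k = d \<Longrightarrow> v2 \<in> N2 \<Longrightarrow> dep v2 + k = d \<Longrightarrow>
    eqv m k ((N1,\<tau>1),v1) ((N2,\<tau>2),v2) \<Longrightarrow> a \<in> desc N1 k v1 \<Longrightarrow> P (col ((N1,\<tau>1),a)) \<Longrightarrow>
    \<exists>b\<in>desc N2 k v2. P (col ((N2,\<tau>2),b))"
proof (induction k arbitrary: v1 v2 a)
  case 0
  then have av: "a = v1" using desc_0 by auto
  have v2d: "v2 \<in> desc N2 0 v2" using 0 desc_0 by auto
  have "col ((N1,\<tau>1),v1) = col ((N2,\<tau>2),v2)" using 0(5) by (simp only: eqv.simps)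
  then show ?case using 0(7) av v2d by metis
next
  case (Suc k)
  obtain w1 where w1: "w1 \<in> ch N1 v1" "a \<in> desc N1 k w1" using desc_Suc[OF vN(1) Suc.prems(1,2)] Suc.prems(6) by blast
  obtain w2 where w2: "w2 \<in> ch N2 v2" "eqv m k ((N1,\<tau>1),w1) ((N2,\<tau>2),w2)"
    using partner[OF Suc.prems(5) m w1(1)] by blast
  have c1: "w1 \<in> N1" "dep w1 + k = d" using child[OF vN(1) w1(1)] Suc.prems(2) by auto
  have c2: "w2 \<in> N2" "dep w2 + k = d" using child[OF vN(2) w2(1)] Suc.prems(4) by auto
  obtain b where "b \<in> desc N2 k w2" "P (col ((N2,\<tau>2),b))"
    using Suc.IH[OF c1 c2 w2(2) w1(2) Suc.prems(7)] by blast
  then show ?case using desc_mono[OF vN(2) Suc.prems(3,4) w2(1)] by blast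
qed

lemma locality:
  assumes vN: "valid N"
  shows "v \<in> N \<Longrightarrow> dep v + k = d \<Longrightarrow> (\<And>j. \<tau> j \<inter> desc N k v = \<tau>' j \<inter> desc N k v) \<Longrightarrow>
     eqv m k ((N,\<tau>),v) ((N,\<tau>'),v)"
proof (induction k arbitrary: v)
  case 0
  then have "v \<in> desc N 0 v" using desc_0 by auto
  then have "\<And>j. v \<in> \<tau> j \<longleftrightarrow> v \<in> \<tau>' j" using 0(3) by blast
  then show ?case by simp
next
  case (Suc k)
  have "eqv m k ((N,\<tau>),w) ((N,\<tau>'),w)" if w: "w \<in> ch N v" for w
  proof -
    have c: "w \<in> N" "dep w + k = d" using child[OF vN w] Suc.prems(2) by auto
    have "desc N k w \<subseteq> desc N (Suc k) v" by (rule desc_mono[OF vN Suc.prems(1,2) w])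
    then have "\<tau> j \<inter> desc N k w = \<tau>' j \<inter> desc N k w" for j using Suc.prems(3)[of j] by blast
    then show ?thesis using Suc.IH[OF c] by blast
  qed
  then have "{w \<in> ch N v. eqv m k ((N,\<tau>),w) z} = {w \<in> ch N v. eqv m k ((N,\<tau>'),w) z}" for z
    using eqv_sym eqv_trans by blast
  then show ?case by (intro eqv_SucI) simp
qed

lemma adj_self: "tm_adj par lab S a a \<longleftrightarrow> (lab a, lab a, 0) \<in> S"
  unfolding tm_adj_def tm_leaf_dist_def by simp

lemma adj_cross:
  assumes "(par ^^ k) a \<noteq> (par ^^ k) b" "(par ^^ Suc k) a = (par ^^ Suc k) b"
  shows "tm_adj par lab S a b \<longleftrightarrow> (lab a, lab b, Suc k) \<in> S"
proof -
  have "(LEAST j. (par ^^ j) a = (par ^^ j) b) = Suc k"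
  proof (rule Least_equality)
    show "(par ^^ Suc k) a = (par ^^ Suc k) b" by (rule assms(2))
  next
    fix j assume j: "(par ^^ j) a = (par ^^ j) b"
    show "Suc k \<le> j"
    proof (rule ccontr)
      assume "\<not> Suc k \<le> j"
      then have "k = (k - j) + j" by simp
      then have "(par ^^ k) a = (par ^^ (k - j)) ((par ^^ j) a)" "(par ^^ k) b = (par ^^ (k - j)) ((par ^^ j) b)"
        by (metis comp_apply funpow_add)+
      then show False using j assms(1) by simp
    qed
  qed
  then have dist: "tm_leaf_dist par a b = 2 * Suc k" by (simp add: tm_leaf_dist_def)
  have "\<And>l. (2 * Suc k = 2 * l) = (l = Suc k)" by presburger
  then show ?thesis unfolding tm_adj_def dist by metis
qed

definition edgeb :: "(nat \<times> nat \<times> nat) set \<Rightarrow> 'n set \<Rightarrow> (nat \<Rightarrow> 'n set) \<Rightarrow> nat \<Rightarrow> 'n \<Rightarrow> nat \<Rightarrow> nat \<Rightarrow> bool" where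
  "edgeb S N \<tau> k v i j \<longleftrightarrow> (\<exists>a\<in>desc N k v. \<exists>b\<in>desc N k v. a \<in> \<tau> i \<and> b \<in> \<tau> j \<and> tm_adj par lab S a b)"

lemma desc_par:
  assumes "valid N" "v \<in> N" "dep v + Suc k = d" "a \<in> desc N (Suc k) v"
  obtains w where "w \<in> ch N v" "a \<in> desc N k w" "(par ^^ k) a = w"
  using desc_Suc[OF assms(1-3)] assms(4) by (auto simp: desc_def)

lemma edge_pres:
  assumes vN: "valid N1" "valid N2" and m: "2 \<le> m" and ij: "i < K" "j < K"
  shows "v1 \<in> N1 \<Longrightarrow> dep v1 + k = d \<Longrightarrow> v2 \<in> N2 \<Longrightarrow> dep v2 + k = d \<Longrightarrow>
    eqv m k ((N1,\<tau>1),v1) ((N2,\<tau>2),v2) \<Longrightarrow> edgeb S N1 \<tau>1 k v1 i j \<Longrightarrow> edgeb S N2 \<tau>2 k v2 i j"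
proof (induction k arbitrary: v1 v2)
  case 0
  then have d1: "desc N1 0 v1 = {v1}" and d2: "desc N2 0 v2 = {v2}" using desc_0 by auto
  have l1: "lab v1 \<le> r" "lab v2 \<le> r" using 0 vN unfolding valid_def by auto
  have ce: "col ((N1,\<tau>1),v1) = col ((N2,\<tau>2),v2)" using 0(5) by simp
  then have "lab v1 = lab v2" "v1 \<in> \<tau>1 i \<longleftrightarrow> v2 \<in> \<tau>2 i" "v1 \<in> \<tau>1 j \<longleftrightarrow> v2 \<in> \<tau>2 j"
    using l1 ij by (auto simp: set_eq_iff)
  then show ?case using 0(6) unfolding edgeb_def d1 d2 by (simp add: adj_self)
next
  case (Suc k)
  obtain a b where ab: "a \<in> desc N1 (Suc k) v1" "b \<in> desc N1 (Suc k) v1" "a \<in> \<tau>1 i" "b \<in> \<tau>1 j"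
    "tm_adj par lab S a b" using Suc.prems(6) unfolding edgeb_def by blast
  obtain wa where wa: "wa \<in> ch N1 v1" "a \<in> desc N1 k wa" "(par ^^ k) a = wa"
    using desc_par[OF vN(1) Suc.prems(1,2) ab(1)] by blast
  obtain wb where wb: "wb \<in> ch N1 v1" "b \<in> desc N1 k wb" "(par ^^ k) b = wb"
    using desc_par[OF vN(1) Suc.prems(1,2) ab(2)] by blast
  show ?case
  proof (cases "wa = wb")
    case True
    have eb: "edgeb S N1 \<tau>1 k wa i j" unfolding edgeb_def using ab wa wb True by blast
    obtain w2 where w2: "w2 \<in> ch N2 v2" "eqv m k ((N1,\<tau>1),wa) ((N2,\<tau>2),w2)"
      using partner[OF Suc.prems(5) _ wa(1)] m by auto
    have c1: "wa \<in> N1" "dep wa + k = d" using child[OF vN(1) wa(1)] Suc.prems(2) by auto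
    have c2: "w2 \<in> N2" "dep w2 + k = d" using child[OF vN(2) w2(1)] Suc.prems(4) by auto
    have "edgeb S N2 \<tau>2 k w2 i j" using Suc.IH[OF c1 c2 w2(2) eb] .
    then show ?thesis using desc_mono[OF vN(2) Suc.prems(3,4) w2(1)] unfolding edgeb_def by blast
  next
    case False
    obtain w2a w2b where w2: "w2a \<in> ch N2 v2" "w2b \<in> ch N2 v2" "w2a \<noteq> w2b"
      "eqv m k ((N1,\<tau>1),wa) ((N2,\<tau>2),w2a)" "eqv m k ((N1,\<tau>1),wb) ((N2,\<tau>2),w2b)"
      using partner2[OF Suc.prems(5) m wa(1) wb(1) False] by blast
    have ca: "wa \<in> N1" "dep wa + k = d" using child[OF vN(1) wa(1)] Suc.prems(2) by auto
    have cb: "wb \<in> N1" "dep wb + k = d" using child[OF vN(1) wb(1)] Suc.prems(2) by auto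
    have c2a: "w2a \<in> N2" "dep w2a + k = d" using child[OF vN(2) w2(1)] Suc.prems(4) by auto
    have c2b: "w2b \<in> N2" "dep w2b + k = d" using child[OF vN(2) w2(2)] Suc.prems(4) by auto
    have la: "a \<in> N1" "dep a = d" using desc_sub[OF wa(2)] by auto
    have lb: "b \<in> N1" "dep b = d" using desc_sub[OF wb(2)] by auto
    have "(par ^^ Suc k) a = v1" "(par ^^ Suc k) b = v1" using desc_sub[OF ab(1)] desc_sub[OF ab(2)] by blast+
    then have S1: "(lab a, lab b, Suc k) \<in> S" using adj_cross[of k a b] wa(3) wb(3) False ab(5) by simp
    have Pa: "(\<lambda>c. i \<in> snd c \<and> fst c = lab a) (col ((N1,\<tau>1),a))"
      using col_leaf[OF vN(1) la] ab(3) ij by simp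
    obtain a' where a': "a' \<in> desc N2 k w2a" "(\<lambda>c. i \<in> snd c \<and> fst c = lab a) (col ((N2,\<tau>2),a'))"
      using ex_col[where P="\<lambda>c. i \<in> snd c \<and> fst c = lab a", OF vN _ ca c2a w2(4) wa(2) Pa] m by force
    have Pb: "(\<lambda>c. j \<in> snd c \<and> fst c = lab b) (col ((N1,\<tau>1),b))"
      using col_leaf[OF vN(1) lb] ab(4) ij by simp
    obtain b' where b': "b' \<in> desc N2 k w2b" "(\<lambda>c. j \<in> snd c \<and> fst c = lab b) (col ((N2,\<tau>2),b'))"
      using ex_col[where P="\<lambda>c. j \<in> snd c \<and> fst c = lab b", OF vN _ cb c2b w2(5) wb(2) Pb] m by force
    have la': "a' \<in> N2" "dep a' = d" "(par ^^ k) a' = w2a" using desc_sub[OF a'(1)] by auto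
    have lb': "b' \<in> N2" "dep b' = d" "(par ^^ k) b' = w2b" using desc_sub[OF b'(1)] by auto
    have a'p: "a' \<in> \<tau>2 i" "lab a' = lab a" using a'(2) col_leaf[OF vN(2) la'(1,2)] by auto
    have b'p: "b' \<in> \<tau>2 j" "lab b' = lab b" using b'(2) col_leaf[OF vN(2) lb'(1,2)] by auto
    have "(par ^^ Suc k) a' = v2" "(par ^^ Suc k) b' = v2"
      using la'(3) lb'(3) child[OF vN(2) w2(1)] child[OF vN(2) w2(2)] by auto
    then have "tm_adj par lab S a' b'" using adj_cross[of k a' b'] la'(3) lb'(3) w2(3) a'p b'p S1 by simp
    moreover have "a' \<in> desc N2 (Suc k) v2" "b' \<in> desc N2 (Suc k) v2"
      using desc_mono[OF vN(2) Suc.prems(3,4) w2(1)] desc_mono[OF vN(2) Suc.prems(3,4) w2(2)] a'(1) b'(1) by auto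
    ultimately show ?thesis unfolding edgeb_def using a'p b'p by blast
  qed
qed

end


context tctx begin

lemma setmove:
  assumes vN: "valid N1" "valid N2" and m0: "1 \<le> m0" and T: "\<forall>k'<d. ncl m0 k' \<le> T"
    and Tm: "T * m0 < m1"
  shows "v1 \<in> N1 \<Longrightarrow> dep v1 + k = d \<Longrightarrow> v2 \<in> N2 \<Longrightarrow> dep v2 + k = d \<Longrightarrow>
    eqv m1 k ((N1,\<tau>1),v1) ((N2,\<tau>2),v2) \<Longrightarrow>
    \<exists>X2 \<subseteq> desc N2 k v2. eqv m0 k ((N1,\<tau>1(i:=X)),v1) ((N2,\<tau>2(i:=X2)),v2)"
proof (induction k arbitrary: v1 v2)
  case 0
  define X2 where "X2 = (if v1 \<in> X then {v2} else {})"
  have sub: "X2 \<subseteq> desc N2 0 v2" using desc_0 0 by (auto simp: X2_def)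
  have ce: "col ((N1,\<tau>1),v1) = col ((N2,\<tau>2),v2)" using 0(5) by (simp only: eqv.simps)
  then have l: "(if lab v1 \<le> r then lab v1 else 0) = (if lab v2 \<le> r then lab v2 else 0)"
    and s: "{j. j < K \<and> v1 \<in> \<tau>1 j} = {j. j < K \<and> v2 \<in> \<tau>2 j}" by simp_all
  have s2: "{j. j < K \<and> v1 \<in> (\<tau>1(i:=X)) j} = {j. j < K \<and> v2 \<in> (\<tau>2(i:=X2)) j}"
  proof (intro Collect_cong)
    fix j
    show "(j < K \<and> v1 \<in> (\<tau>1(i:=X)) j) = (j < K \<and> v2 \<in> (\<tau>2(i:=X2)) j)"
    proof (cases "j = i")
      case True then show ?thesis by (simp add: X2_def)
    next
      case False
      have "(j < K \<and> v1 \<in> \<tau>1 j) = (j < K \<and> v2 \<in> \<tau>2 j)" using s by (simp add: set_eq_iff)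
      then show ?thesis using False by simp
    qed
  qed
  have "eqv m0 0 ((N1,\<tau>1(i:=X)),v1) ((N2,\<tau>2(i:=X2)),v2)" using l s2 by simp
  then show ?case using sub by blast
next
  case (Suc k)
  define A where "A = ch N1 v1"
  define B where "B = ch N2 v2"
  define h1 where "h1 w = cls m1 k ((N1,\<tau>1),w)" for w
  define h2 where "h2 w = cls m1 k ((N2,\<tau>2),w)" for w
  define g where "g w = cls m0 k ((N1,\<tau>1(i:=X)),w)" for w
  have kd: "k < d" using Suc.prems(2) by simp
  have eq: "\<forall>\<omega>. capc m1 {a\<in>A. h1 a = \<omega>} = capc m1 {b\<in>B. h2 b = \<omega>}"
  proof
    fix \<omega>
    show "capc m1 {a\<in>A. h1 a = \<omega>} = capc m1 {b\<in>B. h2 b = \<omega>}"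
    proof (cases "\<omega> \<in> range (cls m1 k)")
      case True
      then obtain z where z: "\<omega> = cls m1 k z" by blast
      have e1: "{a\<in>A. h1 a = \<omega>} = {w \<in> ch N1 v1. eqv m1 k ((N1,\<tau>1),w) z}"
        unfolding A_def h1_def z using eqv_cls by blast
      have e2: "{b\<in>B. h2 b = \<omega>} = {w \<in> ch N2 v2. eqv m1 k ((N2,\<tau>2),w) z}"
        unfolding B_def h2_def z using eqv_cls by blast
      show ?thesis unfolding e1 e2 by (rule eqv_SucD[OF Suc.prems(5)])
    next
      case False
      then have e1: "{a\<in>A. h1 a = \<omega>} = {}" and e2: "{b\<in>B. h2 b = \<omega>} = {}" unfolding h1_def h2_def by auto
      show ?thesis unfolding e1 e2 ..
    qed
  qed
  have gA: "g ` A \<subseteq> range (cls m0 k)" unfolding g_def by auto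
  have fin: "finite (g ` A)" using finite_subset[OF gA finite_cls] .
  have "card (g ` A) \<le> ncl m0 k" unfolding ncl_def by (rule card_mono[OF finite_cls gA])
  then have cT: "card (g ` A) \<le> T" using T kd by fastforce
  have h1W: "h1 ` A \<subseteq> range (cls m1 k)" unfolding h1_def by auto
  have h2W: "h2 ` B \<subseteq> range (cls m1 k)" unfolding h2_def by auto
  obtain \<pi> where \<pi>: "\<forall>b\<in>B. \<pi> b \<in> A \<and> h1 (\<pi> b) = h2 b"
    "\<forall>\<delta>. capc m0 {b\<in>B. g (\<pi> b) = \<delta>} = capc m0 {a\<in>A. g a = \<delta>}"
    using distr[OF finite_cls h1W h2W eq fin cT Tm m0] by blast
  have "\<forall>b\<in>B. \<exists>Xb. Xb \<subseteq> desc N2 k b \<and> eqv m0 k ((N1,\<tau>1(i:=X)),\<pi> b) ((N2,\<tau>2(i:=Xb)),b)"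
  proof
    fix b assume b: "b \<in> B"
    have pb: "\<pi> b \<in> A" "h1 (\<pi> b) = h2 b" using \<pi>(1) b by auto
    have c1: "\<pi> b \<in> N1" "dep (\<pi> b) + k = d" using child[OF vN(1), of "\<pi> b" v1] pb(1) Suc.prems(2)
      unfolding A_def by auto
    have c2: "b \<in> N2" "dep b + k = d" using child[OF vN(2), of b v2] b Suc.prems(4)
      unfolding B_def by auto
    have "eqv m1 k ((N1,\<tau>1),\<pi> b) ((N2,\<tau>2),b)" using pb(2) eqv_cls unfolding h1_def h2_def by blast
    from Suc.IH[OF c1 c2 this] show "\<exists>Xb. Xb \<subseteq> desc N2 k b \<and> eqv m0 k ((N1,\<tau>1(i:=X)),\<pi> b) ((N2,\<tau>2(i:=Xb)),b)"
      by blast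
  qed
  then obtain XX where XX: "\<forall>b\<in>B. XX b \<subseteq> desc N2 k b \<and> eqv m0 k ((N1,\<tau>1(i:=X)),\<pi> b) ((N2,\<tau>2(i:=XX b)),b)"
    by metis
  define X2 where "X2 = (\<Union>b\<in>B. XX b)"
  have X2sub: "X2 \<subseteq> desc N2 (Suc k) v2"
    unfolding X2_def desc_Suc[OF vN(2) Suc.prems(3,4)] B_def using XX B_def by blast
  have loc: "eqv m0 k ((N2,\<tau>2(i:=X2)),b) ((N2,\<tau>2(i:=XX b)),b)" if b: "b \<in> B" for b
  proof -
    have c2: "b \<in> N2" "dep b + k = d" using child[OF vN(2), of b v2] b Suc.prems(4)
      unfolding B_def by auto
    have "X2 \<inter> desc N2 k b = XX b"
    proof (intro equalityI subsetI)
      fix x assume x: "x \<in> X2 \<inter> desc N2 k b"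
      then obtain b' where b': "b' \<in> B" "x \<in> XX b'" unfolding X2_def by blast
      then have "x \<in> desc N2 k b'" using XX by blast
      then have "b' = b" using x desc_disj[of b' b N2 k] by blast
      then show "x \<in> XX b" using b' by simp
    next
      fix x assume "x \<in> XX b"
      then show "x \<in> X2 \<inter> desc N2 k b" using XX b unfolding X2_def by blast
    qed
    moreover have "XX b \<subseteq> desc N2 k b" using XX b by blast
    ultimately have "(\<tau>2(i:=X2)) j \<inter> desc N2 k b = (\<tau>2(i:=XX b)) j \<inter> desc N2 k b" for j
      by (cases "j = i") auto
    then show ?thesis using locality[OF vN(2) c2] by blast
  qed
  have "capc m0 {w \<in> ch N1 v1. eqv m0 k ((N1,\<tau>1(i:=X)),w) z} = capc m0 {w \<in> ch N2 v2. eqv m0 k ((N2,\<tau>2(i:=X2)),w) z}" for z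
  proof -
    have e1: "{w \<in> ch N1 v1. eqv m0 k ((N1,\<tau>1(i:=X)),w) z} = {a\<in>A. g a = cls m0 k z}"
      unfolding A_def g_def using eqv_cls by blast
    have "eqv m0 k ((N2,\<tau>2(i:=X2)),w) z = (g (\<pi> w) = cls m0 k z)" if w: "w \<in> B" for w
    proof -
      have "eqv m0 k ((N2,\<tau>2(i:=X2)),w) ((N1,\<tau>1(i:=X)),\<pi> w)"
        using loc[OF w] XX w eqv_sym eqv_trans by blast
      then show ?thesis unfolding g_def using eqv_cls by metis
    qed
    then have e2: "{w \<in> ch N2 v2. eqv m0 k ((N2,\<tau>2(i:=X2)),w) z} = {b\<in>B. g (\<pi> b) = cls m0 k z}"
      unfolding B_def by blast
    show ?thesis unfolding e1 e2 using \<pi>(2) by simp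
  qed
  then have "eqv m0 (Suc k) ((N1,\<tau>1(i:=X)),v1) ((N2,\<tau>2(i:=X2)),v2)" by (rule eqv_SucI)
  then show ?case using X2sub by blast
qed

end


context tctx begin

lemma prune:
  assumes vN: "valid N" and m: "1 \<le> m"
  shows "\<exists>N'. N' \<subseteq> N \<and> finite N' \<and> valid N' \<and> eqv m d ((N,\<tau>),rt) ((N',\<tau>),rt)"
proof -
  define cl where "cl w = cls m (d - dep w) ((N,\<tau>),w)" for w
  define F where "F v \<omega> = {w \<in> ch N v. cl w = \<omega>}" for v \<omega>
  have exR: "\<exists>R. R \<subseteq> F v \<omega> \<and> finite R \<and> capc m R = capc m (F v \<omega>)" for v \<omega>
  proof (cases "finite (F v \<omega>) \<and> card (F v \<omega>) < m")
    case True then show ?thesis by blast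
  next
    case False
    then obtain R where R: "R \<subseteq> F v \<omega>" "finite R" "card R = m" using exists_sub_card by blast
    have "capc m (F v \<omega>) = m" using False by (auto simp: capc_def)
    moreover have "capc m R = m" using R by (simp add: capc_def)
    ultimately show ?thesis using R by metis
  qed
  define R where "R v \<omega> = (SOME R. R \<subseteq> F v \<omega> \<and> finite R \<and> capc m R = capc m (F v \<omega>))" for v \<omega>
  have R: "R v \<omega> \<subseteq> F v \<omega> \<and> finite (R v \<omega>) \<and> capc m (R v \<omega>) = capc m (F v \<omega>)" for v \<omega>
    unfolding R_def by (rule someI_ex[OF exR])
  have RF: "w \<in> R v \<omega> \<Longrightarrow> w \<in> ch N v \<and> cl w = \<omega>" for w v \<omega> using R[of v \<omega>] unfolding F_def by blast
  define keep where "keep w \<longleftrightarrow> w \<in> R (par w) (cl w)" for w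
  define N' where "N' = {w\<in>N. \<forall>j<dep w. keep ((par ^^ j) w)}"
  have vN': "rt \<in> N" "dep rt = 0" "\<And>v. v \<in> N \<Longrightarrow> v \<noteq> rt \<Longrightarrow> par v \<in> N \<and> dep v = Suc (dep (par v))"
    "\<And>v. v \<in> N \<Longrightarrow> dep v \<le> d" "\<And>v. v \<in> N \<Longrightarrow> dep v < d \<Longrightarrow> \<exists>w. w \<in> ch N v"
    "\<And>v. v \<in> N \<Longrightarrow> dep v = d \<Longrightarrow> lab v \<le> r"
    using vN unfolding valid_def by auto
  have sub: "N' \<subseteq> N" unfolding N'_def by auto
  have rtN': "rt \<in> N'" unfolding N'_def using vN' by simp
  have clos: "par w \<in> N'" if w: "w \<in> N'" "w \<noteq> rt" for w
  proof -
    have wN: "w \<in> N" and kw: "\<forall>j<dep w. keep ((par ^^ j) w)" using w unfolding N'_def by auto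
    have p: "par w \<in> N" "dep w = Suc (dep (par w))" using vN'(3)[OF wN w(2)] by auto
    have "keep ((par ^^ j) (par w))" if j: "j < dep (par w)" for j
    proof -
      have "(par ^^ j) (par w) = (par ^^ Suc j) w" by (simp add: funpow_swap1)
      moreover have "Suc j < dep w" using j p by simp
      ultimately show ?thesis using kw by metis
    qed
    then show ?thesis using p unfolding N'_def by blast
  qed
  have kept: "w \<in> N'" if v: "v \<in> N'" and w: "w \<in> ch N v" and kw: "keep w" for v w
  proof -
    have c: "w \<in> N" "par w = v" "dep w = Suc (dep v)" using child[OF vN w] by auto
    have kv: "\<forall>j<dep v. keep ((par ^^ j) v)" using v unfolding N'_def by auto
    have "keep ((par ^^ j) w)" if j: "j < dep w" for j
    proof (cases j)
      case 0 then show ?thesis using kw by simp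
    next
      case (Suc j')
      then have "(par ^^ j) w = (par ^^ j') v" using c(2) by (simp add: funpow_swap1)
      moreover have "j' < dep v" using j c(3) Suc by simp
      ultimately show ?thesis using kv by metis
    qed
    then show ?thesis using c unfolding N'_def by blast
  qed
  have chN': "ch N' v = {w \<in> ch N v. keep w}" if v: "v \<in> N'" for v
  proof (intro equalityI subsetI)
    fix w assume w: "w \<in> ch N' v"
    then have w1: "w \<in> N'" "w \<noteq> rt" "par w = v" unfolding ch_def by auto
    then have "w \<in> N" "0 < dep w" using vN'(3)[of w] sub by auto
    then have "keep w" using w1 unfolding N'_def by (metis (no_types, lifting) funpow_0 mem_Collect_eq)
    then show "w \<in> {w \<in> ch N v. keep w}" using w1 sub unfolding ch_def by auto
  next
    fix w assume "w \<in> {w \<in> ch N v. keep w}"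
    then have "w \<in> ch N v" "keep w" by auto
    then have "w \<in> N'" using kept[OF v] by blast
    then show "w \<in> ch N' v" using \<open>w \<in> ch N v\<close> unfolding ch_def by auto
  qed
  have valid': "valid N'"
  proof -
    have "\<exists>w. w \<in> ch N' v" if v: "v \<in> N'" "dep v < d" for v
    proof -
      obtain w where w: "w \<in> ch N v" using vN'(5) v sub by blast
      then have "w \<in> F v (cl w)" unfolding F_def by simp
      then have "F v (cl w) \<noteq> {}" by blast
      then have "0 < capc m (F v (cl w))" using capc_pos[OF m] by blast
      then have "0 < capc m (R v (cl w))" using R by metis
      then have "R v (cl w) \<noteq> {}" using capc_pos[OF m] by blast
      then obtain w' where w': "w' \<in> R v (cl w)" by blast
      then have w'2: "w' \<in> ch N v" "cl w' = cl w" using RF by blast+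
      then have "par w' = v" unfolding ch_def by simp
      then have "keep w'" unfolding keep_def using w' w'2 by simp
      then show ?thesis using chN'[OF v(1)] w'2 by blast
    qed
    moreover have "\<forall>v\<in>N'. v \<noteq> rt \<longrightarrow> par v \<in> N' \<and> dep v = Suc (dep (par v))"
      using clos vN'(3) sub by blast
    ultimately show ?thesis unfolding valid_def using rtN' vN' sub by blast
  qed
  have main: "v \<in> N' \<Longrightarrow> dep v + k = d \<Longrightarrow> eqv m k ((N,\<tau>),v) ((N',\<tau>),v)" for k v
  proof (induction k arbitrary: v)
    case 0 then show ?case by simp
  next
    case (Suc k)
    have "capc m {w \<in> ch N v. eqv m k ((N,\<tau>),w) z} = capc m {w \<in> ch N' v. eqv m k ((N',\<tau>),w) z}" for z
    proof -
      have clw: "cl w = cls m k ((N,\<tau>),w)" if "w \<in> ch N v" for w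
      proof -
        have "d - dep w = k" using child[OF vN that] Suc.prems(2) by simp
        then show ?thesis unfolding cl_def by simp
      qed
      have e1: "{w \<in> ch N v. eqv m k ((N,\<tau>),w) z} = F v (cls m k z)"
        unfolding F_def using clw eqv_cls by blast
      have "eqv m k ((N',\<tau>),w) z = (cl w = cls m k z)" if w: "w \<in> ch N' v" for w
      proof -
        have w1: "w \<in> ch N v" using w chN'[OF Suc.prems(1)] by blast
        have c: "w \<in> N'" "dep w + k = d" using child[OF valid' w] Suc.prems(2) by auto
        have "eqv m k ((N,\<tau>),w) ((N',\<tau>),w)" by (rule Suc.IH[OF c])
        then have "eqv m k ((N',\<tau>),w) z = eqv m k ((N,\<tau>),w) z" using eqv_sym eqv_trans by blast
        then show ?thesis using clw[OF w1] eqv_cls by simp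
      qed
      then have "{w \<in> ch N' v. eqv m k ((N',\<tau>),w) z} = {w \<in> ch N' v. cl w = cls m k z}" by blast
      also have "\<dots> = R v (cls m k z)"
      proof (intro equalityI subsetI)
        fix w assume "w \<in> {w \<in> ch N' v. cl w = cls m k z}"
        then have w: "w \<in> ch N v" "keep w" "cl w = cls m k z" using chN'[OF Suc.prems(1)] by auto
        then show "w \<in> R v (cls m k z)" unfolding keep_def ch_def by auto
      next
        fix w assume w: "w \<in> R v (cls m k z)"
        then have w2: "w \<in> ch N v" "cl w = cls m k z" using RF by blast+
        then have "keep w" using w unfolding keep_def ch_def by auto
        then show "w \<in> {w \<in> ch N' v. cl w = cls m k z}" using w2 chN'[OF Suc.prems(1)] by blast
      qed
      finally show ?thesis unfolding e1 using R by metis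
    qed
    then show ?case by (rule eqv_SucI)
  qed
  have eqrt: "eqv m d ((N,\<tau>),rt) ((N',\<tau>),rt)" using main[OF rtN'] vN'(2) by simp
  define Lt where "Lt t = {w \<in> N'. dep w = t}" for t
  have finLt: "finite (Lt t)" for t
  proof (induction t)
    case 0
    have "Lt 0 \<subseteq> {rt}" unfolding Lt_def using vN'(3) sub by fastforce
    then show ?case using finite_subset by blast
  next
    case (Suc t)
    have "Lt (Suc t) \<subseteq> (\<Union>v\<in>Lt t. \<Union>\<omega>\<in>range (cls m (d - Suc t)). R v \<omega>)"
    proof
      fix w assume "w \<in> Lt (Suc t)"
      then have w: "w \<in> N'" "dep w = Suc t" unfolding Lt_def by auto
      then have wrt: "w \<noteq> rt" using vN'(2) by auto
      then have pw: "par w \<in> N'" "dep w = Suc (dep (par w))" using clos[OF w(1)] vN'(3) sub w(1) by auto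
      have "keep w" using w unfolding N'_def by (metis (no_types, lifting) funpow_0 mem_Collect_eq zero_less_Suc)
      then have "w \<in> R (par w) (cl w)" unfolding keep_def .
      moreover have "cl w \<in> range (cls m (d - Suc t))" unfolding cl_def using w by simp
      moreover have "par w \<in> Lt t" using pw w unfolding Lt_def by simp
      ultimately show "w \<in> (\<Union>v\<in>Lt t. \<Union>\<omega>\<in>range (cls m (d - Suc t)). R v \<omega>)" by blast
    qed
    moreover have "finite (\<Union>v\<in>Lt t. \<Union>\<omega>\<in>range (cls m (d - Suc t)). R v \<omega>)"
      using Suc.IH finite_cls R by blast
    ultimately show ?case using finite_subset by blast
  qed
  have "N' \<subseteq> (\<Union>t\<in>{..d}. Lt t)" unfolding Lt_def using vN'(4) sub by blast
  then have "finite N'" using finLt finite_subset by blast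
  then show ?thesis using sub valid' eqrt by blast
qed

end


datatype sf = SSub nat nat | SEdge nat nat | SNeg sf | SConj sf sf | SEx nat sf

fun sat2 :: "'a set \<Rightarrow> ('a \<Rightarrow> 'a \<Rightarrow> bool) \<Rightarrow> (nat \<Rightarrow> 'a set) \<Rightarrow> sf \<Rightarrow> bool" where
  "sat2 V E \<tau> (SSub i j) = (\<tau> i \<subseteq> \<tau> j)"
| "sat2 V E \<tau> (SEdge i j) = (\<exists>a\<in>\<tau> i. \<exists>b\<in>\<tau> j. E a b)"
| "sat2 V E \<tau> (SNeg p) = (\<not> sat2 V E \<tau> p)"
| "sat2 V E \<tau> (SConj p q) = (sat2 V E \<tau> p \<and> sat2 V E \<tau> q)"
| "sat2 V E \<tau> (SEx i p) = (\<exists>X. X \<subseteq> V \<and> sat2 V E (\<tau>(i:=X)) p)"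

fun srank :: "sf \<Rightarrow> nat" where
  "srank (SSub i j) = 0"
| "srank (SEdge i j) = 0"
| "srank (SNeg p) = srank p"
| "srank (SConj p q) = max (srank p) (srank q)"
| "srank (SEx i p) = Suc (srank p)"

fun svars :: "sf \<Rightarrow> nat set" where
  "svars (SSub i j) = {i, j}"
| "svars (SEdge i j) = {i, j}"
| "svars (SNeg p) = svars p"
| "svars (SConj p q) = svars p \<union> svars q"
| "svars (SEx i p) = insert i (svars p)"

context tctx begin

primrec Mth :: "nat \<Rightarrow> nat" where
  "Mth 0 = 2"
| "Mth (Suc q) = Suc (Suc (\<Sum>k<d. ncl (Mth q) k) * Mth q)"

lemma Mth_ge2: "2 \<le> Mth q"
proof (induction q)
  case 0 then show ?case by simp
next
  case (Suc q)
  have "Mth q \<le> Suc (\<Sum>k<d. ncl (Mth q) k) * Mth q" by simp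
  then show ?case using Suc by simp
qed

lemma Mth_T:
  shows "\<forall>k'<d. ncl (Mth q) k' \<le> Suc (\<Sum>k<d. ncl (Mth q) k)"
    and "Suc (\<Sum>k<d. ncl (Mth q) k) * Mth q < Mth (Suc q)"
proof -
  show "\<forall>k'<d. ncl (Mth q) k' \<le> Suc (\<Sum>k<d. ncl (Mth q) k)"
  proof (intro allI impI)
    fix k' assume "k' < d"
    then have "ncl (Mth q) k' \<le> (\<Sum>k<d. ncl (Mth q) k)" by (intro member_le_sum) auto
    then show "ncl (Mth q) k' \<le> Suc (\<Sum>k<d. ncl (Mth q) k)" by simp
  qed
  show "Suc (\<Sum>k<d. ncl (Mth q) k) * Mth q < Mth (Suc q)" by simp
qed

lemma col_desc:
  assumes "valid N" "a \<in> desc N k v"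
  shows "col ((N', \<tau>), a) = (lab a, {j. j < K \<and> a \<in> \<tau> j})"
  using col_leaf[OF assms(1)] desc_sub[OF assms(2)] by blast

lemma rt_pos: "valid N \<Longrightarrow> rt \<in> N \<and> dep rt + d = d"
  unfolding valid_def by simp

lemma sub_pres:
  assumes vN: "valid N1" "valid N2" and ij: "i < K" "j < K"
    and t1: "\<forall>j. \<tau>1 j \<subseteq> desc N1 d rt" and t2: "\<forall>j. \<tau>2 j \<subseteq> desc N2 d rt"
    and e: "eqv m d ((N1,\<tau>1),rt) ((N2,\<tau>2),rt)" and m: "1 \<le> m"
    and s: "\<not> \<tau>1 i \<subseteq> \<tau>1 j"
  shows "\<not> \<tau>2 i \<subseteq> \<tau>2 j"
proof -
  obtain a where a: "a \<in> \<tau>1 i" "a \<notin> \<tau>1 j" using s by blast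
  then have ad: "a \<in> desc N1 d rt" using t1 by blast
  have P: "(\<lambda>c. i \<in> snd c \<and> j \<notin> snd c) (col ((N1,\<tau>1),a))" using col_desc[OF vN(1) ad] a ij by simp
  obtain b where b: "b \<in> desc N2 d rt" "(\<lambda>c. i \<in> snd c \<and> j \<notin> snd c) (col ((N2,\<tau>2),b))"
    using ex_col[where P="\<lambda>c. i \<in> snd c \<and> j \<notin> snd c", OF vN m _ _ _ _ e ad P] rt_pos[OF vN(1)] rt_pos[OF vN(2)]
    by blast
  then have "b \<in> \<tau>2 i" "b \<notin> \<tau>2 j" using col_desc[OF vN(2) b(1)] ij by auto
  then show ?thesis by blast
qed

lemma edge_iff:
  assumes "\<forall>j. \<tau> j \<subseteq> desc N d rt"
  shows "(\<exists>a\<in>\<tau> i. \<exists>b\<in>\<tau> j. tm_adj par lab S a b) = edgeb S N \<tau> d rt i j"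
  using assms unfolding edgeb_def by blast

lemma main_equiv:
  assumes vN: "valid N1" "valid N2"
  shows "srank p \<le> q \<Longrightarrow> svars p \<subseteq> {..<K} \<Longrightarrow> (\<forall>j. \<tau>1 j \<subseteq> desc N1 d rt) \<Longrightarrow> (\<forall>j. \<tau>2 j \<subseteq> desc N2 d rt) \<Longrightarrow>
    eqv (Mth q) d ((N1,\<tau>1),rt) ((N2,\<tau>2),rt) \<Longrightarrow>
    sat2 (desc N1 d rt) (tm_adj par lab S) \<tau>1 p = sat2 (desc N2 d rt) (tm_adj par lab S) \<tau>2 p"
proof (induction p arbitrary: q \<tau>1 \<tau>2)
  case (SSub i j)
  have ij: "i < K" "j < K" using SSub.prems(2) by auto
  have m: "1 \<le> Mth q" using Mth_ge2[of q] by simp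
  have e2: "eqv (Mth q) d ((N2,\<tau>2),rt) ((N1,\<tau>1),rt)" using SSub.prems(5) eqv_sym by blast
  show ?case using sub_pres[OF vN ij SSub.prems(3,4,5) m] sub_pres[OF vN(2,1) ij SSub.prems(4,3) e2 m] by auto
next
  case (SEdge i j)
  have ij: "i < K" "j < K" using SEdge.prems(2) by auto
  have m: "2 \<le> Mth q" using Mth_ge2[of q] by simp
  have e2: "eqv (Mth q) d ((N2,\<tau>2),rt) ((N1,\<tau>1),rt)" using SEdge.prems(5) eqv_sym by blast
  have r1: "rt \<in> N1" "dep rt + d = d" and r2: "rt \<in> N2" "dep rt + d = d" using rt_pos vN by auto
  have "edgeb S N1 \<tau>1 d rt i j = edgeb S N2 \<tau>2 d rt i j"
    using edge_pres[OF vN m ij r1 r2 SEdge.prems(5)] edge_pres[OF vN(2,1) m ij r2 r1 e2] by blast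
  then show ?case using edge_iff[OF SEdge.prems(3)] edge_iff[OF SEdge.prems(4)] by simp
next
  case (SNeg p)
  then show ?case by simp
next
  case (SConj p1 p2)
  have "sat2 (desc N1 d rt) (tm_adj par lab S) \<tau>1 p1 = sat2 (desc N2 d rt) (tm_adj par lab S) \<tau>2 p1"
    using SConj.IH(1)[of q] SConj.prems by simp
  moreover have "sat2 (desc N1 d rt) (tm_adj par lab S) \<tau>1 p2 = sat2 (desc N2 d rt) (tm_adj par lab S) \<tau>2 p2"
    using SConj.IH(2)[of q] SConj.prems by simp
  ultimately show ?case by simp
next
  case (SEx i p)
  obtain q' where q: "q = Suc q'" using SEx.prems(1) by (cases q) auto
  have rk: "srank p \<le> q'" using SEx.prems(1) q by simp
  have vs: "svars p \<subseteq> {..<K}" using SEx.prems(2) by simp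
  have m0: "1 \<le> Mth q'" using Mth_ge2[of q'] by simp
  have r1: "rt \<in> N1" "dep rt + d = d" and r2: "rt \<in> N2" "dep rt + d = d" using rt_pos vN by auto
  have e1: "eqv (Mth (Suc q')) d ((N1,\<tau>1),rt) ((N2,\<tau>2),rt)" using SEx.prems(5) q by simp
  have e2: "eqv (Mth (Suc q')) d ((N2,\<tau>2),rt) ((N1,\<tau>1),rt)" using e1 eqv_sym by blast
  note MT = Mth_T[of q']
  show ?case
  proof
    assume "sat2 (desc N1 d rt) (tm_adj par lab S) \<tau>1 (SEx i p)"
    then obtain X where X: "X \<subseteq> desc N1 d rt" "sat2 (desc N1 d rt) (tm_adj par lab S) (\<tau>1(i:=X)) p" by auto
    obtain X2 where X2: "X2 \<subseteq> desc N2 d rt" "eqv (Mth q') d ((N1,\<tau>1(i:=X)),rt) ((N2,\<tau>2(i:=X2)),rt)"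
      using setmove[OF vN m0 MT r1 r2 e1] by blast
    have t1: "\<forall>j. (\<tau>1(i:=X)) j \<subseteq> desc N1 d rt" using SEx.prems(3) X(1) by simp
    have t2: "\<forall>j. (\<tau>2(i:=X2)) j \<subseteq> desc N2 d rt" using SEx.prems(4) X2(1) by simp
    have "sat2 (desc N2 d rt) (tm_adj par lab S) (\<tau>2(i:=X2)) p"
      using SEx.IH[OF rk vs t1 t2 X2(2)] X(2) by blast
    then show "sat2 (desc N2 d rt) (tm_adj par lab S) \<tau>2 (SEx i p)" using X2(1) by auto
  next
    assume "sat2 (desc N2 d rt) (tm_adj par lab S) \<tau>2 (SEx i p)"
    then obtain X where X: "X \<subseteq> desc N2 d rt" "sat2 (desc N2 d rt) (tm_adj par lab S) (\<tau>2(i:=X)) p" by auto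
    obtain X1 where X1: "X1 \<subseteq> desc N1 d rt" "eqv (Mth q') d ((N2,\<tau>2(i:=X)),rt) ((N1,\<tau>1(i:=X1)),rt)"
      using setmove[OF vN(2,1) m0 MT r2 r1 e2] by blast
    have t1: "\<forall>j. (\<tau>1(i:=X1)) j \<subseteq> desc N1 d rt" using SEx.prems(3) X1(1) by simp
    have t2: "\<forall>j. (\<tau>2(i:=X)) j \<subseteq> desc N2 d rt" using SEx.prems(4) X(1) by simp
    have "eqv (Mth q') d ((N1,\<tau>1(i:=X1)),rt) ((N2,\<tau>2(i:=X)),rt)" using X1(2) eqv_sym by blast
    then have "sat2 (desc N1 d rt) (tm_adj par lab S) (\<tau>1(i:=X1)) p"
      using SEx.IH[OF rk vs t1 t2] X(2) by blast
    then show "sat2 (desc N1 d rt) (tm_adj par lab S) \<tau>1 (SEx i p)" using X1(1) by auto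
  qed
qed

lemma tree_equiv:
  assumes vN: "valid N" and vs: "svars p \<subseteq> {..<K}"
  shows "\<exists>N'. N' \<subseteq> N \<and> finite N' \<and> valid N' \<and>
    sat2 (desc N d rt) (tm_adj par lab S) (\<lambda>_. {}) p = sat2 (desc N' d rt) (tm_adj par lab S) (\<lambda>_. {}) p"
proof -
  have m: "1 \<le> Mth (srank p)" using Mth_ge2[of "srank p"] by simp
  obtain N' where N': "N' \<subseteq> N" "finite N'" "valid N'" "eqv (Mth (srank p)) d ((N,\<lambda>_. {}),rt) ((N',\<lambda>_. {}),rt)"
    using prune[OF vN m] by blast
  have "sat2 (desc N d rt) (tm_adj par lab S) (\<lambda>_. {}) p = sat2 (desc N' d rt) (tm_adj par lab S) (\<lambda>_. {}) p"
    by (rule main_equiv[OF vN N'(3) order.refl vs _ _ N'(4)]) auto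
  then show ?thesis using N' by blast
qed

end


lemma svars_bounded: "\<exists>K. svars p \<subseteq> {..<K}"
proof (induction p)
  case (SSub i j) then show ?case by (intro exI[of _ "Suc (max i j)"]) auto
next
  case (SEdge i j) then show ?case by (intro exI[of _ "Suc (max i j)"]) auto
next
  case (SNeg p) then show ?case by simp
next
  case (SConj p q)
  then obtain K1 K2 where "svars p \<subseteq> {..<K1}" "svars q \<subseteq> {..<K2}" by blast
  then show ?case by (intro exI[of _ "max K1 K2"]) auto
next
  case (SEx i p)
  then obtain K1 where "svars p \<subseteq> {..<K1}" by blast
  then show ?case by (intro exI[of _ "max K1 (Suc i)"]) auto
qed

fun sfv :: "sf \<Rightarrow> nat set" where
  "sfv (SSub i j) = {i, j}"
| "sfv (SEdge i j) = {i, j}"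
| "sfv (SNeg p) = sfv p"
| "sfv (SConj p q) = sfv p \<union> sfv q"
| "sfv (SEx i p) = sfv p - {i}"

lemma sat2_cong: "(\<forall>j\<in>sfv p. \<tau> j = \<tau>' j) \<Longrightarrow> sat2 V E \<tau> p = sat2 V E \<tau>' p"
proof (induction p arbitrary: \<tau> \<tau>')
  case (SEx i p)
  have "\<And>X. sat2 V E (\<tau>(i:=X)) p = sat2 V E (\<tau>'(i:=X)) p"
    using SEx.IH SEx.prems by simp
  then show ?case by simp
next
  case (SConj p1 p2)
  have "sat2 V E \<tau> p1 = sat2 V E \<tau>' p1" using SConj.IH(1) SConj.prems by simp
  moreover have "sat2 V E \<tau> p2 = sat2 V E \<tau>' p2" using SConj.IH(2) SConj.prems by simp
  ultimately show ?case by simp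
next
  case (SNeg p)
  then show ?case by simp
qed simp_all

definition empt :: "nat \<Rightarrow> nat \<Rightarrow> sf" where
  "empt y z = SNeg (SEx z (SNeg (SSub y z)))"

definition sing :: "nat \<Rightarrow> sf" where
  "sing a = SConj (SNeg (empt a (a+3)))
     (SNeg (SEx (a+2) (SConj (SSub (a+2) a) (SConj (SNeg (empt (a+2) (a+3))) (SNeg (SSub a (a+2)))))))"

lemma sat_empt: "y \<noteq> z \<Longrightarrow> sat2 V E \<tau> (empt y z) = (\<tau> y = {})"
  unfolding empt_def by auto

lemma sat_sing:
  assumes "\<tau> a \<subseteq> V"
  shows "sat2 V E \<tau> (sing a) = (\<exists>x\<in>V. \<tau> a = {x})"
proof -
  have "sat2 V E \<tau> (sing a) = (\<tau> a \<noteq> {} \<and> \<not> (\<exists>Y. Y \<subseteq> V \<and> Y \<subseteq> \<tau> a \<and> Y \<noteq> {} \<and> \<not> \<tau> a \<subseteq> Y))"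
    unfolding sing_def by (simp add: sat_empt)
  also have "\<dots> = (\<exists>x\<in>V. \<tau> a = {x})"
  proof
    assume h: "\<tau> a \<noteq> {} \<and> \<not> (\<exists>Y. Y \<subseteq> V \<and> Y \<subseteq> \<tau> a \<and> Y \<noteq> {} \<and> \<not> \<tau> a \<subseteq> Y)"
    then obtain x where x: "x \<in> \<tau> a" by blast
    have "\<tau> a \<subseteq> {x}"
    proof
      fix y assume y: "y \<in> \<tau> a"
      show "y \<in> {x}"
      proof (rule ccontr)
        assume "y \<notin> {x}"
        then have "{x} \<subseteq> V \<and> {x} \<subseteq> \<tau> a \<and> {x} \<noteq> {} \<and> \<not> \<tau> a \<subseteq> {x}" using x y assms by blast
        then show False using h by blast
      qed
    qed
    then show "\<exists>x\<in>V. \<tau> a = {x}" using x assms by blast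
  next
    assume "\<exists>x\<in>V. \<tau> a = {x}"
    then obtain x where "\<tau> a = {x}" by blast
    then show "\<tau> a \<noteq> {} \<and> \<not> (\<exists>Y. Y \<subseteq> V \<and> Y \<subseteq> \<tau> a \<and> Y \<noteq> {} \<and> \<not> \<tau> a \<subseteq> Y)"
      by (auto simp: subset_singleton_iff)
  qed
  finally show ?thesis .
qed

lemma sfv_sing: "sfv (sing a) = {a}"
  unfolding sing_def empt_def by auto

fun tr :: "form \<Rightarrow> sf" where
  "tr (FEq i j) = SSub (4*i) (4*j)"
| "tr (FEdge i j) = SEdge (4*i) (4*j)"
| "tr (FMem i j) = SSub (4*i) (4*j+1)"
| "tr (FNeg p) = SNeg (tr p)"
| "tr (FConj p q) = SConj (tr p) (tr q)"
| "tr (FEx i p) = SEx (4*i) (SConj (sing (4*i)) (tr p))"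
| "tr (FExSet j p) = SEx (4*j+1) (tr p)"

definition enc :: "(nat \<Rightarrow> 'a) \<Rightarrow> (nat \<Rightarrow> 'a set) \<Rightarrow> nat \<Rightarrow> 'a set" where
  "enc \<sigma> \<tau> n = (if n mod 4 = 0 then {\<sigma> (n div 4)} else if n mod 4 = 1 then \<tau> (n div 4) else {})"

lemma enc0[simp]: "enc \<sigma> \<tau> (4*i) = {\<sigma> i}" by (simp add: enc_def)
lemma enc1[simp]: "enc \<sigma> \<tau> (Suc (4*i)) = \<tau> i"
proof -
  have "Suc (4*i) mod 4 = 1" "Suc (4*i) div 4 = i" by presburger+
  then show ?thesis unfolding enc_def by simp
qed

lemma enc_upd1: "(enc \<sigma> \<tau>)(4*i := {x}) = enc (\<sigma>(i:=x)) \<tau>"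
proof
  fix n show "((enc \<sigma> \<tau>)(4*i := {x})) n = enc (\<sigma>(i:=x)) \<tau> n"
  proof (cases "n = 4*i")
    case False
    have "n mod 4 = 0 \<Longrightarrow> n div 4 \<noteq> i" using False by presburger
    then show ?thesis using False by (simp add: enc_def)
  qed simp
qed

lemma enc_upd2: "(enc \<sigma> \<tau>)(4*j+1 := X) = enc \<sigma> (\<tau>(j:=X))"
proof
  fix n show "((enc \<sigma> \<tau>)(4*j+1 := X)) n = enc \<sigma> (\<tau>(j:=X)) n"
  proof (cases "n = 4*j+1")
    case False
    have "n mod 4 = 1 \<Longrightarrow> n div 4 \<noteq> j" using False by presburger
    then show ?thesis using False by (simp add: enc_def)
  qed simp
qed

lemma tr_correct: "sat V E \<sigma> \<tau> p = sat2 V E (enc \<sigma> \<tau>) (tr p)"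
proof (induction p arbitrary: \<sigma> \<tau>)
  case (FEx i p)
  have s1: "sat2 V E (enc \<sigma> \<tau>) (tr (FEx i p)) =
    (\<exists>X. X \<subseteq> V \<and> sat2 V E ((enc \<sigma> \<tau>)(4*i := X)) (sing (4*i)) \<and> sat2 V E ((enc \<sigma> \<tau>)(4*i := X)) (tr p))"
    by (simp only: tr.simps sat2.simps)
  have s2: "X \<subseteq> V \<Longrightarrow> sat2 V E ((enc \<sigma> \<tau>)(4*i := X)) (sing (4*i)) = (\<exists>x\<in>V. X = {x})" for X
  proof -
    assume "X \<subseteq> V"
    then have "((enc \<sigma> \<tau>)(4*i := X)) (4*i) \<subseteq> V" by simp
    from sat_sing[where \<tau>="(enc \<sigma> \<tau>)(4*i := X)" and a="4*i", OF this] show ?thesis by simp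
  qed
  have "sat2 V E (enc \<sigma> \<tau>) (tr (FEx i p)) = (\<exists>x\<in>V. sat2 V E ((enc \<sigma> \<tau>)(4*i := {x})) (tr p))"
    unfolding s1 using s2 by blast
  also have "\<dots> = (\<exists>x\<in>V. sat2 V E (enc (\<sigma>(i:=x)) \<tau>) (tr p))"
    by (simp only: enc_upd1)
  also have "\<dots> = (\<exists>x\<in>V. sat V E (\<sigma>(i:=x)) \<tau> p)" using FEx.IH by blast
  finally show ?case by simp
next
  case (FExSet j p)
  have "sat2 V E (enc \<sigma> \<tau>) (tr (FExSet j p)) = (\<exists>X. X \<subseteq> V \<and> sat2 V E ((enc \<sigma> \<tau>)(4*j+1 := X)) (tr p))"
    by (simp only: tr.simps sat2.simps)
  also have "\<dots> = (\<exists>X. X \<subseteq> V \<and> sat2 V E (enc \<sigma> (\<tau>(j:=X))) (tr p))" by (simp only: enc_upd2)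
  also have "\<dots> = (\<exists>X. X \<subseteq> V \<and> sat V E \<sigma> (\<tau>(j:=X)) p)" using FExSet.IH by blast
  finally show ?case by simp
next
  case (FEq i j) then show ?case by simp
next
  case (FEdge i j) then show ?case by simp
next
  case (FMem i j) then show ?case by simp
next
  case (FNeg p) then show ?case by simp
next
  case (FConj p q) then show ?case by simp
qed

lemma sfv_tr: "sfv (tr p) \<subseteq> (\<lambda>i. 4*i) ` fv1 p \<union> (\<lambda>j. 4*j+1) ` fv2 p"
proof (induction p)
  case (FEx i p)
  have "sfv (tr (FEx i p)) = (insert (4*i) (sfv (tr p))) - {4*i}" by (simp add: sfv_sing)
  also have "\<dots> \<subseteq> ((\<lambda>i. 4*i) ` fv1 p \<union> (\<lambda>j. 4*j+1) ` fv2 p) - {4*i}" using FEx.IH by blast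
  also have "\<dots> \<subseteq> (\<lambda>i. 4*i) ` fv1 (FEx i p) \<union> (\<lambda>j. 4*j+1) ` fv2 (FEx i p)" by auto
  finally show ?case .
next
  case (FExSet j p)
  have "sfv (tr (FExSet j p)) = sfv (tr p) - {4*j+1}" by simp
  also have "\<dots> \<subseteq> ((\<lambda>i. 4*i) ` fv1 p \<union> (\<lambda>j. 4*j+1) ` fv2 p) - {4*j+1}" using FExSet.IH by blast
  also have "\<dots> \<subseteq> (\<lambda>i. 4*i) ` fv1 (FExSet j p) \<union> (\<lambda>j. 4*j+1) ` fv2 (FExSet j p)" by auto
  finally show ?case .
qed auto

lemma holds_tr:
  assumes "mso_sentence p"
  shows "holds V E p = sat2 V E (\<lambda>_. {}) (tr p)"
proof -
  have "sfv (tr p) = {}" using sfv_tr[of p] assms unfolding mso_sentence_def by simp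
  then show ?thesis unfolding holds_def tr_correct using sat2_cong by blast
qed

lemma sat2_iso:
  assumes f: "bij_betw f L V" and E: "\<forall>u\<in>L. \<forall>v\<in>L. E (f u) (f v) = A u v"
  shows "(\<forall>j. \<tau> j \<subseteq> L) \<Longrightarrow> sat2 V E (\<lambda>j. f ` \<tau> j) p = sat2 L A \<tau> p"
proof (induction p arbitrary: \<tau>)
  case (SSub i j)
  have inj: "inj_on f L" using f bij_betw_def by blast
  have "(f ` \<tau> i \<subseteq> f ` \<tau> j) = (\<tau> i \<subseteq> \<tau> j)"
  proof
    assume h: "f ` \<tau> i \<subseteq> f ` \<tau> j"
    show "\<tau> i \<subseteq> \<tau> j"
    proof
      fix x assume x: "x \<in> \<tau> i"
      then have "f x \<in> f ` \<tau> j" using h by blast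
      then show "x \<in> \<tau> j" using inj_on_image_mem_iff[OF inj, of x "\<tau> j"] x SSub.prems by blast
    qed
  qed blast
  then show ?case by simp
next
  case (SEdge i j)
  show ?case using E SEdge.prems by (simp; blast)
next
  case (SNeg p) then show ?case by simp
next
  case (SConj p q) then show ?case by simp
next
  case (SEx i p)
  have upd: "(\<lambda>j. f ` (\<tau>(i:=Y)) j) = (\<lambda>j. f ` \<tau> j)(i := f ` Y)" for Y by (simp add: fun_eq_iff)
  show ?case
  proof
    assume "sat2 V E (\<lambda>j. f ` \<tau> j) (SEx i p)"
    then obtain X where X: "X \<subseteq> V" "sat2 V E ((\<lambda>j. f ` \<tau> j)(i:=X)) p" by auto
    define Y where "Y = inv_into L f ` X"
    have Y: "Y \<subseteq> L" unfolding Y_def using X(1) f by (metis bij_betw_def image_subsetI inv_into_into subsetD)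
    have fY: "f ` Y = X" unfolding Y_def using X(1) f by (metis bij_betw_imp_surj_on image_inv_into_cancel)
    have t: "\<forall>j. (\<tau>(i:=Y)) j \<subseteq> L" using SEx.prems Y by simp
    have "(\<lambda>j. f ` (\<tau>(i:=Y)) j) = (\<lambda>j. f ` \<tau> j)(i := X)" using upd[of Y] fY by simp
    then have "sat2 V E (\<lambda>j. f ` (\<tau>(i:=Y)) j) p" using X(2) by simp
    then have "sat2 L A (\<tau>(i:=Y)) p" using SEx.IH[OF t] by blast
    then show "sat2 L A \<tau> (SEx i p)" using Y by auto
  next
    assume "sat2 L A \<tau> (SEx i p)"
    then obtain Y where Y: "Y \<subseteq> L" "sat2 L A (\<tau>(i:=Y)) p" by auto
    have t: "\<forall>j. (\<tau>(i:=Y)) j \<subseteq> L" using SEx.prems Y by simp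
    have "sat2 V E (\<lambda>j. f ` (\<tau>(i:=Y)) j) p" using SEx.IH[OF t] Y(2) by blast
    then have "sat2 V E ((\<lambda>j. f ` \<tau> j)(i := f ` Y)) p" using upd[of Y] by simp
    moreover have "f ` Y \<subseteq> V" using Y(1) f bij_betw_imp_surj_on by blast
    ultimately show "sat2 V E (\<lambda>j. f ` \<tau> j) (SEx i p)" by auto
  qed
qed


context tctx begin

lemma leaf_iff:
  assumes vN: "valid N"
  shows "tm_leaf N rt par v \<longleftrightarrow> (v \<in> N \<and> dep v = d)"
proof
  assume l: "tm_leaf N rt par v"
  then have v: "v \<in> N" and nc: "\<And>w. \<not> tm_child N rt par w v" unfolding tm_leaf_def by auto
  have "\<not> dep v < d"
  proof
    assume "dep v < d"
    then obtain w where "w \<in> ch N v" using vN v unfolding valid_def by blast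
    then show False using nc unfolding tm_child_def ch_def by blast
  qed
  moreover have "dep v \<le> d" using vN v unfolding valid_def by blast
  ultimately show "v \<in> N \<and> dep v = d" using v by simp
next
  assume v: "v \<in> N \<and> dep v = d"
  have "\<not> tm_child N rt par w v" for w
  proof
    assume "tm_child N rt par w v"
    then have "w \<in> ch N v" unfolding tm_child_def ch_def by blast
    then have "w \<in> N" "dep w = Suc (dep v)" using child[OF vN] by auto
    then show False using vN v unfolding valid_def by force
  qed
  then show "tm_leaf N rt par v" using v unfolding tm_leaf_def by blast
qed

lemma leaves_desc: "valid N \<Longrightarrow> tm_leaves N rt par = desc N d rt"
  using leaf_iff desc_root unfolding tm_leaves_def by auto

lemma model_valid:
  assumes tm: "is_tree_model r d N rt par dep lab S"
  shows "valid N"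
proof -
  have base: "rt \<in> N" "dep rt = 0" "\<forall>v\<in>N. v \<noteq> rt \<longrightarrow> par v \<in> N \<and> dep v = Suc (dep (par v))"
    "\<forall>v\<in>N. dep v \<le> d" "\<forall>v. tm_leaf N rt par v \<longrightarrow> dep v = d"
    "\<forall>v. tm_leaf N rt par v \<longrightarrow> lab v \<in> {1..r}"
    using tm unfolding is_tree_model_def by blast+
  have c: "\<exists>w. w \<in> ch N v" if v: "v \<in> N" "dep v < d" for v
  proof (rule ccontr)
    assume "\<not> (\<exists>w. w \<in> ch N v)"
    then have "tm_leaf N rt par v" using v unfolding tm_leaf_def tm_child_def ch_def by blast
    then show False using base(5) v by auto
  qed
  have l: "lab v \<le> r" if v: "v \<in> N" "dep v = d" for v
  proof -
    have "\<not> tm_child N rt par w v" for w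
    proof
      assume "tm_child N rt par w v"
      then have "w \<in> N" "w \<noteq> rt" "par w = v" unfolding tm_child_def by auto
      then show False using base(3,4) v by force
    qed
    then have "tm_leaf N rt par v" using v unfolding tm_leaf_def by blast
    then show ?thesis using base(6) by auto
  qed
  show ?thesis unfolding valid_def using base c l by blast
qed

lemma model_sub:
  assumes tm: "is_tree_model r d N rt par dep lab S" and sub: "N' \<subseteq> N" and vN': "valid N'"
  shows "is_tree_model r d N' rt par dep lab S"
proof -
  have vN: "valid N" by (rule model_valid[OF tm])
  have base: "\<forall>v. tm_leaf N rt par v \<longrightarrow> lab v \<in> {1..r}"
    "\<forall>v\<in>N. \<not> tm_leaf N rt par v \<longrightarrow> lab v = r + 1"
    "S \<subseteq> {1..r} \<times> {1..r} \<times> {1..d}" "\<forall>i j l. (i, j, l) \<in> S \<longleftrightarrow> (j, i, l) \<in> S"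
    using tm unfolding is_tree_model_def by blast+
  have v': "rt \<in> N'" "dep rt = 0" "\<forall>v\<in>N'. v \<noteq> rt \<longrightarrow> par v \<in> N' \<and> dep v = Suc (dep (par v))"
    "\<forall>v\<in>N'. dep v \<le> d"
    using vN' unfolding valid_def by blast+
  have l1: "\<forall>v. tm_leaf N' rt par v \<longrightarrow> dep v = d" using leaf_iff[OF vN'] by blast
  have l2: "\<forall>v. tm_leaf N' rt par v \<longrightarrow> lab v \<in> {1..r}"
    using leaf_iff[OF vN'] leaf_iff[OF vN] sub base(1) by blast
  have l3: "\<forall>v\<in>N'. \<not> tm_leaf N' rt par v \<longrightarrow> lab v = r + 1"
    using leaf_iff[OF vN'] leaf_iff[OF vN] sub base(2) by blast
  show ?thesis unfolding is_tree_model_def using v' l1 l2 l3 base(3,4) by blast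
qed

end

lemma reduce:
  fixes V :: "'a set"
  assumes tmV: "in_TM r d V E" and p: "mso_sentence p"
  shows "\<exists>(V' :: 'a set) E'. in_TM r d V' E' \<and> finite V' \<and> (holds V E p \<longleftrightarrow> holds V' E' p)"
proof -
  have gr: "is_graph V E" using tmV unfolding in_TM_def by blast
  obtain N :: "('a \<times> nat) set" and rt par dep lab S f where
    tm: "is_tree_model r d N rt par dep lab S" and f: "bij_betw f (tm_leaves N rt par) V" and
    adj: "\<forall>u \<in> tm_leaves N rt par. \<forall>v \<in> tm_leaves N rt par. E (f u) (f v) \<longleftrightarrow> tm_adj par lab S u v"
    using tmV unfolding in_TM_def by blast
  obtain K where K: "svars (tr p) \<subseteq> {..<K}" using svars_bounded by blast
  interpret T: tctx par rt dep d lab r K .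
  have vN: "T.valid N" by (rule T.model_valid[OF tm])
  obtain N' where N': "N' \<subseteq> N" "finite N'" "T.valid N'"
    "sat2 (T.desc N d rt) (tm_adj par lab S) (\<lambda>_. {}) (tr p) = sat2 (T.desc N' d rt) (tm_adj par lab S) (\<lambda>_. {}) (tr p)"
    using T.tree_equiv[OF vN K] by blast
  define L where "L = tm_leaves N rt par"
  define L' where "L' = tm_leaves N' rt par"
  have LL: "L = T.desc N d rt" "L' = T.desc N' d rt" unfolding L_def L'_def
    using T.leaves_desc vN N'(3) by auto
  have L'L: "L' \<subseteq> L" unfolding LL T.desc_def using N'(1) by auto
  have finL': "finite L'" unfolding LL T.desc_def using N'(2) by simp
  define V' where "V' = f ` L'"
  define E' where "E' = (\<lambda>x y. E x y \<and> x \<in> V' \<and> y \<in> V')"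
  have f': "bij_betw f L' V'" unfolding V'_def using f L'L unfolding L_def
    by (meson bij_betw_def inj_on_imp_bij_betw inj_on_subset)
  have adj': "\<forall>u \<in> L'. \<forall>v \<in> L'. E' (f u) (f v) \<longleftrightarrow> tm_adj par lab S u v"
    using adj L'L unfolding L_def E'_def V'_def by blast
  have gr': "is_graph V' E'" using gr unfolding is_graph_def E'_def by blast
  have tm': "is_tree_model r d N' rt par dep lab S" by (rule T.model_sub[OF tm N'(1) N'(3)])
  have inTM': "in_TM r d V' E'"
    unfolding in_TM_def using gr' tm' f' adj' unfolding L'_def by blast
  have e: "(\<lambda>j. f ` (\<lambda>_. {}) j) = (\<lambda>_. {})" by simp
  have h1: "holds V E p = sat2 L (tm_adj par lab S) (\<lambda>_. {}) (tr p)"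
    using holds_tr[OF p, of V E] sat2_iso[OF f[folded L_def] adj[folded L_def], of "\<lambda>_. {}" "tr p"] e by simp
  have h2: "holds V' E' p = sat2 L' (tm_adj par lab S) (\<lambda>_. {}) (tr p)"
    using holds_tr[OF p, of V' E'] sat2_iso[OF f' adj', of "\<lambda>_. {}" "tr p"] e by simp
  have "holds V E p = holds V' E' p" using h1 h2 N'(4) LL by simp
  moreover have "finite V'" unfolding V'_def using finL' by simp
  ultimately show ?thesis using inTM' by blast
qed

theorem corollary10:
  fixes r d :: nat
  shows "(\<forall>p. fo_sentence p \<longrightarrow>
            ((\<forall>(V :: 'a set) E. in_TM r d V E \<and> finite V \<longrightarrow> holds V E p) \<longleftrightarrow>
             (\<forall>(V :: 'a set) E. in_TM r d V E \<longrightarrow> holds V E p))) \<and>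
         (\<forall>p. mso_sentence p \<longrightarrow>
            ((\<forall>(V :: 'a set) E. in_TM r d V E \<and> finite V \<longrightarrow> holds V E p) \<longleftrightarrow>
             (\<forall>(V :: 'a set) E. in_TM r d V E \<longrightarrow> holds V E p)))"
proof -
  have mso: "((\<forall>(V :: 'a set) E. in_TM r d V E \<and> finite V \<longrightarrow> holds V E p) \<longleftrightarrow>
             (\<forall>(V :: 'a set) E. in_TM r d V E \<longrightarrow> holds V E p))" if p: "mso_sentence p" for p
  proof
    assume H: "\<forall>(V :: 'a set) E. in_TM r d V E \<and> finite V \<longrightarrow> holds V E p"
    show "\<forall>(V :: 'a set) E. in_TM r d V E \<longrightarrow> holds V E p"
    proof (intro allI impI)
      fix V :: "'a set" and E assume "in_TM r d V E"
      then obtain V' :: "'a set" and E' where "in_TM r d V' E'" "finite V'" "holds V E p \<longleftrightarrow> holds V' E' p"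
        using reduce[OF _ p] by blast
      then show "holds V E p" using H by blast
    qed
  qed blast
  show ?thesis using mso unfolding fo_sentence_def by blast
qed


end
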